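(* Let $b\ge1$, let $\lambda^{(1)},\dots,\lambda^{(b)}$ be nonempty partitions of total size $n$, and let $k$ be a positive divisor of $n$. If $k$ divides $\gcd(|\lambda^{(1)}|,\dots,|\lambda^{(b)}|)$, then $$\mathrm{SYT}(\lambda^{(1)}\cup\cdots\cup\lambda^{(b)})^{\operatorname{pr}^{n/k}}=\Big\{I_{n/k,M_1}(T_1)\cup\cdots\cup I_{n/k,M_b}(T_b)\ :\ T_j\in\mathrm{SYT}(\lambda^{(j)})^{\operatorname{pr}^{|\lambda^{(j)}|/k}}\ (1\le j\le b),\ (M_1,\dots,M_b)\in\mathcal{P}\Big\},$$ where $\mathcal{P}$ is the set of ordered set partitions $(M_1,\dots,M_b)$ of $[n/k]$ into pairwise disjoint sets with $|M_j|=|\lambda^{(j)}|/k$. Otherwise, $\mathrm{SYT}(\lambda^{(1)}\cup\cdots\cup\lambda^{(b)})^{\operatorname{pr}^{n/k}}=\varnothing$.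
   Context: Tableaux in English notation. $\lambda^{(1)}\cup\cdots\cup\lambda^{(b)}$ is the skew shape formed by placing translates of the Young diagrams $\lambda^{(1)},\dots,\lambda^{(b)}$ block anti-diagonally, with $\lambda^{(j+1)}$ entirely strictly above and strictly to the right of $\lambda^{(j)}$ (no shared rows or columns); for fillings $U_j$ of the pieces, $U_1\cup\cdots\cup U_b$ denotes the corresponding filling of this skew shape. $\mathrm{SYT}(\cdot)$ is the set of standard tableaux of a shape; for a map $g$, $W^g$ is its fixed point set. Promotion $\operatorname{pr}$ on a standard (skew) tableau with $n$ cells: erase $1$, slide the empty cell by jeu de taquin (repeatedly move into it the smaller of its right and lower neighbours in the shape) until it reaches an outer corner of the shape, fill that corner with $n+1$, subtract $1$ from all entries. For a standard tableau $T$ of size $N$, a positive integer $m$, and $A=\{a_1<\cdots<a_q\}\subseteq[m]$ with $q\mid N$, $I_{m,A}(T)$ is obtained from $T$ by replacing each entry $iq+j$ (with $0\le i<N/q$, $1\le j\le q$) by $im+a_j$. *)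

theory Defs
  imports Main
begin

text \<open>Cells are pairs (row, column), English notation: rows grow downward,
columns grow to the right.  A filling (tableau) is a map from cells to nat,
with value 0 outside the shape.\<close>

type_synonym cell = "nat \<times> nat"
type_synonym tableau = "cell \<Rightarrow> nat"

definition is_partition :: "nat list \<Rightarrow> bool" where
  "is_partition lam \<longleftrightarrow> sorted_wrt (\<ge>) lam \<and> (\<forall>x\<in>set lam. 0 < x)"

definition psize :: "nat list \<Rightarrow> nat" where
  "psize lam = sum_list lam"

definition young :: "nat list \<Rightarrow> cell set" where
  "young lam = {(i, j). i < length lam \<and> j < lam ! i}"

definition SYT :: "cell set \<Rightarrow> tableau set" where
  "SYT S = {T. (\<forall>c. c \<notin> S \<longrightarrow> T c = 0)
              \<and> bij_betw T S {1..card S}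
              \<and> (\<forall>i j j'. (i, j) \<in> S \<and> (i, j') \<in> S \<and> j < j' \<longrightarrow> T (i, j) < T (i, j'))
              \<and> (\<forall>i i' j. (i, j) \<in> S \<and> (i', j) \<in> S \<and> i < i' \<longrightarrow> T (i, j) < T (i', j))}"

text \<open>One jeu de taquin move of the empty cell c (which carries value 0).\<close>
definition slide_step :: "cell set \<Rightarrow> tableau \<times> cell \<Rightarrow> tableau \<times> cell" where
  "slide_step S st = (let T = fst st; c = snd st;
      r = (fst c, Suc (snd c)); d = (Suc (fst c), snd c) in
      if r \<in> S \<and> (d \<notin> S \<or> T r < T d) then (T(c := T r, r := 0), r)
      else if d \<in> S then (T(c := T d, d := 0), d)
      else (T, c))"

text \<open>Promotion: erase 1, slide the empty cell to an outer corner (at most card S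
moves; further iterations are idle), fill it with n+1, subtract 1 everywhere.\<close>
definition promotion :: "cell set \<Rightarrow> tableau \<Rightarrow> tableau" where
  "promotion S T = (let c0 = (THE c. c \<in> S \<and> T c = 1);
      st = (slide_step S ^^ card S) (T(c0 := 0), c0);
      T' = fst st; c = snd st in
      (\<lambda>x. if x \<in> S then (if x = c then card S else T' x - 1) else 0))"

definition fixed_SYT :: "cell set \<Rightarrow> nat \<Rightarrow> tableau set" where
  "fixed_SYT S m = {T \<in> SYT S. (promotion S ^^ m) T = T}"

text \<open>I_{m,A}: entry i*q+j (1 \<le> j \<le> q) becomes i*m + a_j, q = |A|.\<close>
definition Iop :: "nat \<Rightarrow> nat set \<Rightarrow> tableau \<Rightarrow> tableau" where
  "Iop m A T = (\<lambda>x. if T x = 0 then 0 else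
      ((T x - 1) div card A) * m + sorted_list_of_set A ! ((T x - 1) mod card A))"

text \<open>Block anti-diagonal placement: piece j+1 lies strictly above and strictly to
the right of piece j (0-indexed pieces).\<close>
definition row_off :: "nat list list \<Rightarrow> nat \<Rightarrow> nat" where
  "row_off lams j = sum_list (map length (drop (Suc j) lams))"

definition col_off :: "nat list list \<Rightarrow> nat \<Rightarrow> nat" where
  "col_off lams j = sum_list (map hd (take j lams))"

definition piece :: "nat list list \<Rightarrow> nat \<Rightarrow> cell set" where
  "piece lams j = (\<lambda>(x, y). (x + row_off lams j, y + col_off lams j)) ` young (lams ! j)"

definition skew_shape :: "nat list list \<Rightarrow> cell set" where
  "skew_shape lams = (\<Union>j<length lams. piece lams j)"

definition skew_union :: "nat list list \<Rightarrow> (nat \<Rightarrow> tableau) \<Rightarrow> tableau" where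
  "skew_union lams U = (\<lambda>(x, y). \<Sum>j<length lams.
      if (x, y) \<in> piece lams j then U j (x - row_off lams j, y - col_off lams j) else 0)"

end

theory Submission
  imports Defs
begin

lemma sls_eq: "sorted_wrt (<) xs \<Longrightarrow> set xs = A \<Longrightarrow> sorted_list_of_set A = (xs::nat list)"
  by (metis List.finite_set strict_sorted_equal strict_sorted_list_of_set set_sorted_list_of_set)

definition rc :: "cell \<Rightarrow> nat" where "rc c = fst c + snd c"

lemma slide_cases:
  "slide_step S st = st \<or> (snd (slide_step S st) \<in> S \<and> rc (snd (slide_step S st)) = Suc (rc (snd st)))"
  by (cases st) (auto simp: slide_step_def Let_def rc_def)

lemma slide_fixed_iff: "slide_step S st = st \<longleftrightarrow> snd (slide_step S st) = snd st"
  using slide_cases[of S st] by auto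

lemma slide_fixed_stay:
  assumes "slide_step S ((slide_step S ^^ s) st) = (slide_step S ^^ s) st" "s \<le> t"
  shows "(slide_step S ^^ t) st = (slide_step S ^^ s) st"
  using assms(2)
proof (induction t)
  case 0 then show ?case by simp
next
  case (Suc t)
  show ?case
  proof (cases "s = Suc t")
    case True then show ?thesis by simp
  next
    case False
    then have "s \<le> t" using Suc.prems by simp
    then have "(slide_step S ^^ t) st = (slide_step S ^^ s) st" using Suc.IH by simp
    then show ?thesis using assms(1) by simp
  qed
qed

lemma slide_iter_fixed:
  assumes "finite S" "snd st \<in> S" "card S \<le> t"
  shows "slide_step S ((slide_step S ^^ t) st) = (slide_step S ^^ t) st"
proof (rule ccontr)
  assume nf: "slide_step S ((slide_step S ^^ t) st) \<noteq> (slide_step S ^^ t) st"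
  have nfs: "slide_step S ((slide_step S ^^ s) st) \<noteq> (slide_step S ^^ s) st" if "s \<le> t" for s
    using slide_fixed_stay[of S s st t] that nf by auto
  have key: "s \<le> t \<longrightarrow> snd ((slide_step S ^^ s) st) \<in> S \<and> rc (snd ((slide_step S ^^ s) st)) = rc (snd st) + s" for s
  proof (induction s)
    case 0 then show ?case using assms(2) by simp
  next
    case (Suc s)
    show ?case
    proof
      assume "Suc s \<le> t"
      then have "slide_step S ((slide_step S ^^ s) st) \<noteq> (slide_step S ^^ s) st" using nfs by simp
      then show "snd ((slide_step S ^^ Suc s) st) \<in> S \<and> rc (snd ((slide_step S ^^ Suc s) st)) = rc (snd st) + Suc s"
        using slide_cases[of S "(slide_step S ^^ s) st"] Suc.IH \<open>Suc s \<le> t\<close> by auto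
    qed
  qed
  have "inj_on (\<lambda>s. snd ((slide_step S ^^ s) st)) {..t}"
    by (rule inj_onI) (metis atMost_iff key add_left_cancel)
  moreover have "(\<lambda>s. snd ((slide_step S ^^ s) st)) ` {..t} \<subseteq> S" using key by auto
  ultimately have "card {..t} \<le> card S" using card_inj_on_le assms(1) by blast
  then show False using assms(3) by simp
qed

lemma slide_iter_eq:
  assumes "finite S" "snd st \<in> S" "card S \<le> t"
  shows "(slide_step S ^^ t) st = (slide_step S ^^ card S) st"
  using slide_fixed_stay[OF slide_iter_fixed[OF assms(1,2) order_refl] assms(3)] .

lemma move_bij:
  assumes "c \<in> S" "r \<in> S" "r \<noteq> c" "bij_betw T (S - {c}) V"
  shows "bij_betw (T(c := T r, r := 0)) (S - {r}) V"
proof -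
  define sw where "sw = (\<lambda>x. if x = c then r else if x = r then c else x)"
  have "bij_betw (T \<circ> sw) (S - {r}) V"
  proof (rule bij_betw_trans[of _ _ "S - {c}"])
    show "bij_betw sw (S - {r}) (S - {c})"
      unfolding bij_betw_def using assms(1-3)
      by (auto simp: inj_on_def sw_def image_iff)
  qed (fact assms(4))
  then show ?thesis
    by (rule bij_betw_cong[THEN iffD1, rotated]) (auto simp: sw_def)
qed

definition slinv :: "cell set \<Rightarrow> nat set \<Rightarrow> tableau \<times> cell \<Rightarrow> bool" where
  "slinv S V st \<longleftrightarrow> snd st \<in> S \<and> fst st (snd st) = 0 \<and> bij_betw (fst st) (S - {snd st}) V
     \<and> (\<forall>x. x \<notin> S \<longrightarrow> fst st x = 0)"

lemma slinv_step: assumes "slinv S V st" "0 \<notin> V" shows "slinv S V (slide_step S st)"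
proof -
  obtain T c where st: "st = (T, c)" by (cases st)
  obtain i j where c: "c = (i, j)" by (cases c)
  have A: "c \<in> S" "T c = 0" "bij_betw T (S - {c}) V" "\<forall>x. x \<notin> S \<longrightarrow> T x = 0"
    using assms(1) st by (auto simp: slinv_def)
  show ?thesis
    using A move_bij[of c S "(i, Suc j)" T V] move_bij[of c S "(Suc i, j)" T V] assms(2)
    unfolding st c slide_step_def Let_def slinv_def by auto
qed

lemma slinv_iter: assumes "slinv S V st" "0 \<notin> V" shows "slinv S V ((slide_step S ^^ t) st)"
  by (induction t) (use assms slinv_step in auto)


definition lite :: "cell set \<Rightarrow> tableau \<Rightarrow> bool" where
  "lite S U \<longleftrightarrow> (\<forall>c. c \<notin> S \<longrightarrow> U c = 0) \<and> bij_betw U S {1..card S}"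

lemma lite_the:
  assumes "finite S" "S \<noteq> {}" "lite S U"
  shows "(THE c. c \<in> S \<and> U c = 1) \<in> S \<and> U (THE c. c \<in> S \<and> U c = 1) = 1"
proof -
  have "card S \<ge> 1" using assms(1,2) by (simp add: Suc_leI card_gt_0_iff)
  then have "1 \<in> U ` S" using assms(3) unfolding lite_def bij_betw_def by auto
  then obtain c where c: "c \<in> S" "U c = 1" by auto
  have inj: "inj_on U S" using assms(3) unfolding lite_def bij_betw_def by simp
  have "\<exists>!c. c \<in> S \<and> U c = 1"
    using c inj_onD[OF inj] by metis
  then show ?thesis by (rule theI')
qed

lemma lite_the_eq:
  assumes "finite S" "lite S U" "c \<in> S" "U c = 1"
  shows "(THE c. c \<in> S \<and> U c = 1) = c"
proof -
  have inj: "inj_on U S" using assms(2) unfolding lite_def bij_betw_def by simp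
  have "\<exists>!c. c \<in> S \<and> U c = 1"
    using assms(3,4) inj_onD[OF inj] by metis
  then show ?thesis using assms(3,4) by (simp add: the1_equality)
qed

lemma slinv_start:
  assumes "finite S" "lite S U" "u0 \<in> S" "U u0 = 1"
  shows "slinv S {2..card S} (U(u0 := 0), u0)"
proof -
  have b: "bij_betw U S {1..card S}" using assms(2) by (simp add: lite_def)
  then have inj: "inj_on U S" and im: "U ` S = {1..card S}" by (auto simp: bij_betw_def)
  have "inj_on (U(u0 := 0)) (S - {u0})" using inj by (auto simp: inj_on_def)
  moreover have "U(u0 := 0) ` (S - {u0}) = U ` (S - {u0})" by auto
  moreover have "U ` (S - {u0}) = U ` S - {U u0}"
    using inj assms(3) by (auto simp: inj_on_def)
  moreover have "{1..card S} - {U u0} = {2..card S}" using assms(4) by auto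
  ultimately have "bij_betw (U(u0 := 0)) (S - {u0}) {2..card S}"
    using im by (simp add: bij_betw_def)
  then show ?thesis using assms(2,3) by (auto simp: slinv_def lite_def)
qed

lemma final_lite:
  assumes "finite S" "slinv S {2..card S} (T', cF)"
  shows "lite S (\<lambda>x. if x \<in> S then (if x = cF then card S else T' x - 1) else 0)"
proof -
  define f where "f = (\<lambda>x. if x \<in> S then (if x = cF then card S else T' x - 1) else 0)"
  have cF: "cF \<in> S" and b: "bij_betw T' (S - {cF}) {2..card S}" using assms(2) by (auto simp: slinv_def)
  have cS: "card S \<ge> 1" using cF assms(1) card_gt_0_iff[of S] by (cases "card S") auto
  have S: "S = insert cF (S - {cF})" using cF by auto
  have "f ` (S - {cF}) = (\<lambda>v. v - 1) ` (T' ` (S - {cF}))" by (auto simp: f_def image_iff)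
  also have "\<dots> = (\<lambda>v. v - 1) ` {2..card S}" using b by (simp add: bij_betw_def)
  also have "\<dots> = {1..card S - 1}"
  proof
    show "(\<lambda>v. v - 1) ` {2..card S} \<subseteq> {1..card S - 1}" by auto
    show "{1..card S - 1} \<subseteq> (\<lambda>v. v - 1) ` {2..card S}"
    proof
      fix x assume "x \<in> {1..card S - 1}"
      then show "x \<in> (\<lambda>v. v - 1) ` {2..card S}" by (intro image_eqI[of _ _ "x + 1"]) auto
    qed
  qed
  finally have im1: "f ` (S - {cF}) = {1..card S - 1}" .
  have "f ` S = insert (f cF) (f ` (S - {cF}))" using cF by blast
  also have "\<dots> = insert (card S) {1..card S - 1}" using im1 cF by (simp add: f_def)
  also have "\<dots> = {1..card S}" using cS by auto
  finally have im: "f ` S = {1..card S}" .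
  have "card (f ` S) = card S" by (simp only: im card_atLeastAtMost)
  then have "inj_on f S" using assms(1) by (intro eq_card_imp_inj_on)
  then have "bij_betw f S {1..card S}" using im by (simp add: bij_betw_def)
  moreover have "\<forall>c. c \<notin> S \<longrightarrow> f c = 0" by (simp add: f_def)
  ultimately have "lite S f" unfolding lite_def by blast
  then show ?thesis by (simp add: f_def)
qed

lemma promotion_unfold:
  "promotion S U = (\<lambda>x. if x \<in> S then (if x = snd ((slide_step S ^^ card S) (U((THE c. c \<in> S \<and> U c = 1) := 0), (THE c. c \<in> S \<and> U c = 1)))
      then card S else fst ((slide_step S ^^ card S) (U((THE c. c \<in> S \<and> U c = 1) := 0), (THE c. c \<in> S \<and> U c = 1))) x - 1) else 0)"
  unfolding promotion_def Let_def by (rule refl)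

lemma promotion_lite:
  assumes "finite S" "S \<noteq> {}" "lite S U"
  shows "lite S (promotion S U)"
proof -
  define u0 where "u0 = (THE c. c \<in> S \<and> U c = 1)"
  have u0: "u0 \<in> S" "U u0 = 1" using lite_the[OF assms] by (auto simp: u0_def)
  obtain T' cF where e: "(slide_step S ^^ card S) (U(u0 := 0), u0) = (T', cF)"
    by (cases "(slide_step S ^^ card S) (U(u0 := 0), u0)")
  have "slinv S {2..card S} (T', cF)"
    using slinv_iter[OF slinv_start[OF assms(1,3) u0], of "card S"] e by simp
  from final_lite[OF assms(1) this] show ?thesis
    unfolding promotion_unfold u0_def[symmetric] e prod.sel .
qed

lemma promotion_pow_lite:
  assumes "finite S" "S \<noteq> {}" "lite S U"
  shows "lite S ((promotion S ^^ t) U)"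
proof (induction t)
  case 0 then show ?case using assms(3) by simp
next
  case (Suc t) then show ?case using promotion_lite[OF assms(1,2)] by simp
qed


definition tr :: "nat \<Rightarrow> nat \<Rightarrow> cell \<Rightarrow> cell" where
  "tr a b = (\<lambda>(x, y). (x + a, y + b))"

lemma tr_simp[simp]: "tr a b (x, y) = (x + a, y + b)" by (simp add: tr_def)

lemma inj_tr: "inj (tr a b)" by (auto simp: inj_def tr_def)

definition nbc :: "nat \<Rightarrow> nat \<Rightarrow> cell set \<Rightarrow> cell set \<Rightarrow> bool" where
  "nbc a b Y S \<longleftrightarrow> (\<forall>x y. (x, y) \<in> Y \<longrightarrow>
      ((x + a, Suc y + b) \<in> S \<longleftrightarrow> (x, Suc y) \<in> Y) \<and> ((Suc x + a, y + b) \<in> S \<longleftrightarrow> (Suc x, y) \<in> Y))"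

definition simrel :: "nat \<Rightarrow> nat \<Rightarrow> cell set \<Rightarrow> (nat \<Rightarrow> nat) \<Rightarrow> tableau \<Rightarrow> tableau \<times> cell \<Rightarrow> tableau \<times> cell \<Rightarrow> bool" where
  "simrel a b Y f T0 st su \<longleftrightarrow> snd st = tr a b (snd su) \<and> snd su \<in> Y
     \<and> (\<forall>y\<in>Y. fst st (tr a b y) = f (fst su y)) \<and> (\<forall>x. x \<notin> tr a b ` Y \<longrightarrow> fst st x = T0 x)"

lemma slide_sim:
  assumes nb: "nbc a b Y S" and sm: "strict_mono f" and f0: "f 0 = 0"
    and r: "simrel a b Y f T0 st su"
  shows "simrel a b Y f T0 (slide_step S st) (slide_step Y su)"
proof -
  obtain T c where st: "st = (T, c)" by (cases st)
  obtain U u where su: "su = (U, u)" by (cases su)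
  obtain i j where u: "u = (i, j)" by (cases u)
  have c: "c = (i + a, j + b)" and uY: "(i, j) \<in> Y"
    and rel: "\<forall>y\<in>Y. T (tr a b y) = f (U y)" and out: "\<forall>x. x \<notin> tr a b ` Y \<longrightarrow> T x = T0 x"
    using r by (auto simp: simrel_def st su u)
  have nR: "(i + a, Suc (j + b)) \<in> S \<longleftrightarrow> (i, Suc j) \<in> Y"
    and nD: "(Suc (i + a), j + b) \<in> S \<longleftrightarrow> (Suc i, j) \<in> Y"
    using nb uY by (auto simp: nbc_def)
  have less: "f x < f y \<longleftrightarrow> x < y" for x y using sm by (simp add: strict_mono_less)
  have injt: "tr a b y = tr a b y' \<longleftrightarrow> y = y'" for y y' by (rule inj_eq[OF inj_tr])
  have TR: "T (i + a, Suc (j + b)) = f (U (i, Suc j))" if "(i, Suc j) \<in> Y"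
    using rel that by (metis add_Suc tr_simp)
  have TD: "T (Suc (i + a), j + b) = f (U (Suc i, j))" if "(Suc i, j) \<in> Y"
    using rel that by (metis add_Suc tr_simp)
  let ?r = "(i, Suc j)" and ?d = "(Suc i, j)"
  have "?r \<noteq> u" "?d \<noteq> u" using u by auto
  show ?thesis
  proof (cases "?r \<in> Y \<and> (?d \<notin> Y \<or> U ?r < U ?d)")
    case True
    have rY: "?r \<in> Y" using True by simp
    from True have cond: "(i + a, Suc (j + b)) \<in> S \<and> ((Suc (i + a), j + b) \<notin> S \<or> T (i + a, Suc (j + b)) < T (Suc (i + a), j + b))"
      using nR nD TR TD less by auto
    have e1: "slide_step S st = (T(c := T (i + a, Suc (j + b)), (i + a, Suc (j + b)) := 0), (i + a, Suc (j + b)))"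
      using cond by (simp add: slide_step_def st c Let_def)
    have e2: "slide_step Y su = (U(u := U ?r, ?r := 0), ?r)"
      using True by (simp add: slide_step_def su u Let_def)
    show ?thesis unfolding simrel_def e1 e2 prod.sel
    proof (intro conjI ballI allI impI)
      fix y assume yY: "y \<in> Y"
      show "(T(c := T (i + a, Suc (j + b)), (i + a, Suc (j + b)) := 0)) (tr a b y) = f ((U(u := U ?r, ?r := 0)) y)"
      proof -
        have "tr a b ?r = (i + a, Suc (j + b))" by simp
        then show ?thesis
        proof (cases "y = u")
          case True then show ?thesis using \<open>?r \<in> Y\<close> TR c u
            by (simp add: \<open>?r \<noteq> u\<close>)
        next
          case yu: False
          show ?thesis
          proof (cases "y = ?r")
            case True then show ?thesis using f0 c u by simp
          next
            case False
            then have "tr a b y \<noteq> (i + a, Suc (j + b))" "tr a b y \<noteq> c" using injt[of y ?r] injt[of y u] yu c u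
              \<open>tr a b ?r = (i + a, Suc (j + b))\<close> by auto
            then show ?thesis using rel yY yu False by simp
          qed
        qed
      qed
    next
      fix x assume "x \<notin> tr a b ` Y"
      then show "(T(c := T (i + a, Suc (j + b)), (i + a, Suc (j + b)) := 0)) x = T0 x"
      proof -
        have "c \<in> tr a b ` Y" using uY c by (metis tr_simp image_eqI)
        moreover have "(i + a, Suc (j + b)) \<in> tr a b ` Y" using True by (metis tr_simp add_Suc image_eqI)
        ultimately have "x \<noteq> c" "x \<noteq> (i + a, Suc (j + b))" using \<open>x \<notin> tr a b ` Y\<close> by auto
        then show ?thesis using out \<open>x \<notin> tr a b ` Y\<close> by (simp del: split_paired_All)
      qed
    qed (use True in auto)
  next
    case False
    note F = False
    show ?thesis
    proof (cases "?d \<in> Y")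
      case True
      have cond: "\<not> ((i + a, Suc (j + b)) \<in> S \<and> ((Suc (i + a), j + b) \<notin> S \<or> T (i + a, Suc (j + b)) < T (Suc (i + a), j + b)))"
        "(Suc (i + a), j + b) \<in> S"
        using F True nR nD TR TD less by auto
      have e1: "slide_step S st = (T(c := T (Suc (i + a), j + b), (Suc (i + a), j + b) := 0), (Suc (i + a), j + b))"
        using cond by (simp add: slide_step_def st c Let_def)
      have e2: "slide_step Y su = (U(u := U ?d, ?d := 0), ?d)"
        using F True by (simp add: slide_step_def su u Let_def)
      show ?thesis unfolding simrel_def e1 e2 prod.sel
      proof (intro conjI ballI allI impI)
        fix y assume yY: "y \<in> Y"
        show "(T(c := T (Suc (i + a), j + b), (Suc (i + a), j + b) := 0)) (tr a b y) = f ((U(u := U ?d, ?d := 0)) y)"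
        proof -
          have "tr a b ?d = (Suc (i + a), j + b)" by simp
          then show ?thesis
        proof (cases "y = u")
          case True then show ?thesis using \<open>?d \<in> Y\<close> TD c u
            by (simp add: \<open>?d \<noteq> u\<close>)
        next
          case yu: False
          show ?thesis
          proof (cases "y = ?d")
            case True then show ?thesis using f0 c u by simp
          next
            case False
            then have "tr a b y \<noteq> (Suc (i + a), j + b)" "tr a b y \<noteq> c" using injt[of y ?d] injt[of y u] yu c u
              \<open>tr a b ?d = (Suc (i + a), j + b)\<close> by auto
            then show ?thesis using rel yY yu False by simp
          qed
        qed
        qed
      next
        fix x assume "x \<notin> tr a b ` Y"
        then show "(T(c := T (Suc (i + a), j + b), (Suc (i + a), j + b) := 0)) x = T0 x"
        proof -
        have "c \<in> tr a b ` Y" using uY c by (metis tr_simp image_eqI)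
        moreover have "(Suc (i + a), j + b) \<in> tr a b ` Y" using True by (metis tr_simp add_Suc image_eqI)
        ultimately have "x \<noteq> c" "x \<noteq> (Suc (i + a), j + b)" using \<open>x \<notin> tr a b ` Y\<close> by auto
        then show ?thesis using out \<open>x \<notin> tr a b ` Y\<close> by (simp del: split_paired_All)
      qed
      qed (use True in auto)
    next
      case False
      have cond: "\<not> ((i + a, Suc (j + b)) \<in> S \<and> ((Suc (i + a), j + b) \<notin> S \<or> T (i + a, Suc (j + b)) < T (Suc (i + a), j + b)))"
        "(Suc (i + a), j + b) \<notin> S"
        using F False nR nD TR TD less by auto
      have e1: "slide_step S st = st"
        using cond by (simp add: slide_step_def st c Let_def)
      have e2: "slide_step Y su = su"
        using F False by (simp add: slide_step_def su u Let_def)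
      show ?thesis unfolding e1 e2 by (fact r)
    qed
  qed
qed

lemma slide_sim_iter:
  assumes nb: "nbc a b Y S" and sm: "strict_mono f" and f0: "f 0 = 0"
    and r: "simrel a b Y f T0 st su"
  shows "simrel a b Y f T0 ((slide_step S ^^ t) st) ((slide_step Y ^^ t) su)"
  by (induction t) (use r slide_sim[OF nb sm f0] in auto)


abbreviation sl :: "nat set \<Rightarrow> nat list" where "sl A \<equiv> sorted_list_of_set A"

definition rel :: "nat set \<Rightarrow> tableau \<Rightarrow> tableau" where
  "rel A U = (\<lambda>y. if U y = 0 then 0 else sl A ! (U y - 1))"

definition ext :: "nat set \<Rightarrow> nat \<Rightarrow> nat" where
  "ext A v = (if v = 0 then 0 else if v \<le> card A then sl A ! (v - 1) else Max (insert 0 A) + v)"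

definition rotn :: "nat \<Rightarrow> nat \<Rightarrow> nat \<Rightarrow> nat" where
  "rotn n t a = (if t < a then a - t else a + n - t)"

lemma sl_nth_in: "finite A \<Longrightarrow> v < card A \<Longrightarrow> sl A ! v \<in> A"
  by (metis length_sorted_list_of_set nth_mem set_sorted_list_of_set)

lemma sl_strict: "finite A \<Longrightarrow> v < w \<Longrightarrow> w < card A \<Longrightarrow> sl A ! v < sl A ! w"
  using strict_sorted_list_of_set[of A] sorted_wrt_nth_less[of "(<)" "sl A" v w] by simp

lemma sl_strict_iff: "finite A \<Longrightarrow> v < card A \<Longrightarrow> w < card A \<Longrightarrow> sl A ! v < sl A ! w \<longleftrightarrow> v < w"
  by (metis linorder_neqE_nat not_less_iff_gr_or_eq sl_strict)

lemma sl_inj: "finite A \<Longrightarrow> v < card A \<Longrightarrow> w < card A \<Longrightarrow> sl A ! v = sl A ! w \<longleftrightarrow> v = w"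
  by (metis linorder_neqE_nat less_irrefl sl_strict)

lemma sl_image: "finite A \<Longrightarrow> (\<lambda>v. sl A ! v) ` {..<card A} = A"
proof
  assume f: "finite A"
  show "(\<lambda>v. sl A ! v) ` {..<card A} \<subseteq> A" using sl_nth_in[OF f] by auto
  show "A \<subseteq> (\<lambda>v. sl A ! v) ` {..<card A}"
  proof
    fix x assume "x \<in> A"
    then have "x \<in> set (sl A)" using f by simp
    then obtain i where "i < length (sl A)" "sl A ! i = x" by (auto simp: in_set_conv_nth)
    then show "x \<in> (\<lambda>v. sl A ! v) ` {..<card A}" by (intro image_eqI[of _ _ i]) auto
  qed
qed

lemma ext_strict_mono:
  assumes "finite A" "0 \<notin> A"
  shows "strict_mono (ext A)"
proof (rule strict_mono_Suc_iff[THEN iffD2], intro allI)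
  fix v
  have le_max: "x \<in> A \<Longrightarrow> x \<le> Max (insert 0 A)" for x using assms(1) by simp
  show "ext A v < ext A (Suc v)"
  proof (cases "v = 0")
    case True
    then show ?thesis
    proof (cases "card A = 0")
      case False
      then have "sl A ! 0 \<in> A" using sl_nth_in[OF assms(1)] by simp
      then have "sl A ! 0 > 0" using assms(2) by (metis gr0I)
      then show ?thesis using True False by (simp add: ext_def)
    qed (simp add: ext_def)
  next
    case False
    show ?thesis
    proof (cases "Suc v \<le> card A")
      case True
      then show ?thesis using False sl_strict[OF assms(1), of "v - 1" v] by (simp add: ext_def)
    next
      case F2: False
      show ?thesis
      proof (cases "v \<le> card A")
        case True
        then have "sl A ! (v - 1) \<in> A" using sl_nth_in[OF assms(1)] False by simp
        then have "sl A ! (v - 1) \<le> Max (insert 0 A)" using le_max by blast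
        then show ?thesis using True F2 False by (simp add: ext_def)
      qed (use False F2 in \<open>simp add: ext_def\<close>)
    qed
  qed
qed

lemma ext_0[simp]: "ext A 0 = 0" by (simp add: ext_def)

lemma rel_ext: "U y \<le> card A \<Longrightarrow> rel A U y = ext A (U y)"
  by (simp add: rel_def ext_def)

lemma rot_in_A:
  assumes "finite A" "A \<subseteq> {1..n}" "1 \<in> A"
  shows "card (rotn n 1 ` A) = card A"
    "sl (rotn n 1 ` A) ! (card A - 1) = n"
    "\<And>v. 1 \<le> v \<Longrightarrow> v < card A \<Longrightarrow> sl (rotn n 1 ` A) ! (v - 1) = sl A ! v - 1"
proof -
  have MinA: "Min A = 1" using assms by (intro Min_eqI) auto
  have sA: "sl A = 1 # sl (A - {1})" using sorted_list_of_set_nonempty[of A] assms MinA by auto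
  define xs where "xs = map (\<lambda>a. a - 1) (sl (A - {1})) @ [n]"
  have B: "\<forall>a\<in>A - {1}. 2 \<le> a \<and> a \<le> n" using assms(2) by auto
  have s1: "sorted_wrt (<) (map (\<lambda>a. a - 1) (sl (A - {1})))"
    unfolding sorted_wrt_map
    by (rule sorted_wrt_mono_rel[OF _ strict_sorted_list_of_set[of "A - {1}"]])
       (use B assms(1) in auto)
  have s2: "\<forall>x\<in>set (map (\<lambda>a. a - 1) (sl (A - {1}))). x < n"
  proof
    fix x assume "x \<in> set (map (\<lambda>a. a - 1) (sl (A - {1})))"
    then obtain a where "a \<in> A - {1}" "x = a - 1" using assms(1) by auto
    moreover have "2 \<le> a" "a \<le> n" using B \<open>a \<in> A - {1}\<close> by auto
    ultimately show "x < n" by simp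
  qed
  have sorted: "sorted_wrt (<) xs" unfolding xs_def sorted_wrt_append using s1 s2 by auto
  have rotA: "rotn n 1 ` A = set xs"
  proof
    show "rotn n 1 ` A \<subseteq> set xs"
    proof
      fix y assume "y \<in> rotn n 1 ` A"
      then obtain x where x: "x \<in> A" "y = rotn n 1 x" by blast
      show "y \<in> set xs"
      proof (cases "x = 1")
        case True then show ?thesis using x by (simp add: xs_def rotn_def)
      next
        case False then have xA: "x \<in> A - {1}" using x by simp
        then have "2 \<le> x" using B by auto
        then have "y = x - 1" using x by (simp add: rotn_def)
        then show ?thesis using xA assms(1) by (auto simp: xs_def)
      qed
    qed
    show "set xs \<subseteq> rotn n 1 ` A"
    proof
      fix x assume "x \<in> set xs"
      then have "x = n \<or> (\<exists>a\<in>A - {1}. x = a - 1)" using assms(1) by (auto simp: xs_def)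
      then show "x \<in> rotn n 1 ` A"
      proof
        assume "x = n" then show ?thesis using assms(3) by (intro image_eqI[of _ _ 1]) (auto simp: rotn_def)
      next
        assume "\<exists>a\<in>A - {1}. x = a - 1"
        then obtain a where a: "a \<in> A - {1}" "x = a - 1" by blast
        then have "2 \<le> a" using B by auto
        then have "x = rotn n 1 a" using a by (simp add: rotn_def)
        then show ?thesis using a by blast
      qed
    qed
  qed
  have eq: "sl (rotn n 1 ` A) = xs" by (rule sls_eq[OF sorted rotA[symmetric]])
  have lenA: "length (sl (A - {1})) = card A - 1" using assms by simp
  have cA: "card A \<ge> 1" using assms(1,3) card_gt_0_iff[of A] by (cases "card A") auto
  have "card (rotn n 1 ` A) = length xs" using eq by (metis length_sorted_list_of_set)
  also have "length xs = card A" using lenA cA by (simp add: xs_def)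
  finally show "card (rotn n 1 ` A) = card A" .
  have "xs ! (card A - 1) = n" unfolding xs_def using lenA by (metis length_map nth_append_length)
  then show "sl (rotn n 1 ` A) ! (card A - 1) = n" using eq by simp
  show "sl (rotn n 1 ` A) ! (v - 1) = sl A ! v - 1" if v: "1 \<le> v" "v < card A" for v
  proof -
    have vl: "v - 1 < card A - 1" using v by arith
    have "xs ! (v - 1) = map (\<lambda>a. a - 1) (sl (A - {1})) ! (v - 1)"
      unfolding xs_def using vl lenA by (simp add: nth_append)
    also have "\<dots> = sl (A - {1}) ! (v - 1) - 1" using vl lenA by simp
    also have "sl (A - {1}) ! (v - 1) = sl A ! v" unfolding sA using v by (simp add: nth_Cons')
    finally show ?thesis using eq by simp
  qed
qed

lemma rot_notin_A:
  assumes "finite A" "A \<subseteq> {1..n}" "1 \<notin> A"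
  shows "card (rotn n 1 ` A) = card A"
    "\<And>v. v < card A \<Longrightarrow> sl (rotn n 1 ` A) ! v = sl A ! v - 1"
proof -
  define xs where "xs = map (\<lambda>a. a - 1) (sl A)"
  have B: "\<forall>a\<in>A. 2 \<le> a \<and> a \<le> n"
  proof
    fix a assume "a \<in> A"
    then have "1 \<le> a" "a \<le> n" "a \<noteq> 1" using assms(2,3) by auto
    then show "2 \<le> a \<and> a \<le> n" by simp
  qed
  have sorted: "sorted_wrt (<) xs"
    unfolding xs_def sorted_wrt_map
    by (rule sorted_wrt_mono_rel[OF _ strict_sorted_list_of_set[of "A"]])
       (use B assms(1) in auto)
  have "rotn n 1 ` A = (\<lambda>a. a - 1) ` A"
    using B by (intro image_cong) (auto simp: rotn_def)
  then have rotA: "rotn n 1 ` A = set xs" using assms(1) by (simp add: xs_def)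
  have eq: "sl (rotn n 1 ` A) = xs" by (rule sls_eq[OF sorted rotA[symmetric]])
  have "card (rotn n 1 ` A) = length xs" using eq by (metis length_sorted_list_of_set)
  then show "card (rotn n 1 ` A) = card A" by (simp add: xs_def)
  show "sl (rotn n 1 ` A) ! v = sl A ! v - 1" if "v < card A" for v
  proof -
    have "xs ! v = sl A ! v - 1" unfolding xs_def using that by (simp add: nth_map)
    then show ?thesis using eq by simp
  qed
qed


lemma young_bound:
  assumes "is_partition lam" "(x, y) \<in> young lam"
  shows "x < length lam" "y < hd lam"
proof -
  show xl: "x < length lam" using assms(2) by (simp add: young_def)
  have yl: "y < lam ! x" using assms(2) by (simp add: young_def)
  have "lam ! x \<le> lam ! 0"
  proof (cases "x = 0")
    case False
    then show ?thesis using assms(1) xl sorted_wrt_nth_less[of "(\<ge>)" lam 0 x] by (simp add: is_partition_def)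
  qed simp
  moreover have "lam \<noteq> []" using xl by auto
  ultimately show "y < hd lam" using yl by (simp add: hd_conv_nth)
qed

lemma young_finite: "finite (young lam)"
proof -
  have "young lam = (SIGMA i:{..<length lam}. {..<lam ! i})" by (auto simp: young_def)
  then show ?thesis by simp
qed

lemma young_card: "card (young lam) = psize lam"
proof -
  have "young lam = (SIGMA i:{..<length lam}. {..<lam ! i})" by (auto simp: young_def)
  then have "card (young lam) = (\<Sum>i<length lam. lam ! i)" by simp
  also have "\<dots> = sum_list lam" by (simp add: sum_list_sum_nth atLeast0LessThan)
  finally show ?thesis by (simp add: psize_def)
qed

locale sk =
  fixes lams :: "nat list list"
  assumes parts: "\<forall>lam\<in>set lams. is_partition lam \<and> psize lam > 0"
begin

abbreviation "b \<equiv> length lams"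
definition "Y j = young (lams ! j)"
definition "q j = psize (lams ! j)"
definition "ro j = row_off lams j"
definition "co j = col_off lams j"
abbreviation "\<tau> j \<equiv> tr (ro j) (co j)"
abbreviation "S \<equiv> skew_shape lams"

lemma part: "j < b \<Longrightarrow> is_partition (lams ! j) \<and> psize (lams ! j) > 0"
  using parts by simp

lemma lam_ne: "j < b \<Longrightarrow> lams ! j \<noteq> []"
  using part[of j] by (auto simp: psize_def)

lemma Y_fin: "finite (Y j)" by (simp add: Y_def young_finite)
lemma Y_card: "card (Y j) = q j" by (simp add: Y_def q_def young_card)
lemma q_pos: "j < b \<Longrightarrow> q j > 0" using part by (simp add: q_def)
lemma Y_ne: "j < b \<Longrightarrow> Y j \<noteq> {}" using q_pos Y_card by (metis card.empty less_irrefl)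

lemma piece_eq: "piece lams j = \<tau> j ` Y j"
  by (simp add: piece_def Y_def ro_def co_def tr_def)

lemma ro_step: assumes "Suc j < b" shows "ro j = length (lams ! Suc j) + ro (Suc j)"
proof -
  have "drop (Suc j) lams = lams ! Suc j # drop (Suc (Suc j)) lams"
    by (rule Cons_nth_drop_Suc[symmetric]) (use assms in simp)
  then show ?thesis unfolding ro_def row_off_def by simp
qed

lemma ro_mono: "i < j \<Longrightarrow> j < b \<Longrightarrow> ro j + length (lams ! j) \<le> ro i"
proof (induction j)
  case 0 then show ?case by simp
next
  case (Suc j)
  show ?case
  proof (cases "i = j")
    case True then show ?thesis using ro_step[of j] Suc.prems by simp
  next
    case False
    then have "ro j + length (lams ! j) \<le> ro i" using Suc by simp
    moreover have "ro j = length (lams ! Suc j) + ro (Suc j)" using ro_step Suc.prems by simp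
    ultimately show ?thesis by simp
  qed
qed

lemma co_step: "j < b \<Longrightarrow> co (Suc j) = co j + hd (lams ! j)"
  unfolding co_def col_off_def by (simp add: take_Suc_conv_app_nth)

lemma co_mono: "i < j \<Longrightarrow> j \<le> b \<Longrightarrow> co i + hd (lams ! i) \<le> co j"
proof (induction j)
  case 0 then show ?case by simp
next
  case (Suc j)
  show ?case
  proof (cases "i = j")
    case True then show ?thesis using co_step[of j] Suc.prems by simp
  next
    case False
    then have "co i + hd (lams ! i) \<le> co j" using Suc by simp
    moreover have "co (Suc j) = co j + hd (lams ! j)" using co_step Suc.prems by simp
    ultimately show ?thesis by simp
  qed
qed

lemma cell_bounds:
  assumes "j < b" "(x, y) \<in> piece lams j"
  shows "ro j \<le> x" "x < ro j + length (lams ! j)" "co j \<le> y" "y < co j + hd (lams ! j)"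
proof -
  obtain x' y' where c: "(x', y') \<in> Y j" "x = x' + ro j" "y = y' + co j"
    using assms(2) unfolding piece_eq by auto
  have "x' < length (lams ! j)" "y' < hd (lams ! j)"
    using young_bound[of "lams ! j" x' y'] part[OF assms(1)] c(1) by (auto simp: Y_def)
  then show "ro j \<le> x" "x < ro j + length (lams ! j)" "co j \<le> y" "y < co j + hd (lams ! j)"
    using c by auto
qed

lemma same_row:
  assumes "i < b" "j < b" "(x, y) \<in> piece lams i" "(x, y') \<in> piece lams j"
  shows "i = j"
proof (rule ccontr)
  assume "i \<noteq> j"
  then consider "i < j" | "j < i" by linarith
  then show False
  proof cases
    case 1 then show False using ro_mono[of i j] assms cell_bounds[of i x y] cell_bounds[of j x y'] by linarith
  next
    case 2 then show False using ro_mono[of j i] assms cell_bounds[of i x y] cell_bounds[of j x y'] by linarith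
  qed
qed

lemma same_col:
  assumes "i < b" "j < b" "(x, y) \<in> piece lams i" "(x', y) \<in> piece lams j"
  shows "i = j"
proof (rule ccontr)
  assume "i \<noteq> j"
  then consider "i < j" | "j < i" by linarith
  then show False
  proof cases
    case 1 then show False using co_mono[of i j] assms cell_bounds[of i x y] cell_bounds[of j x' y] by linarith
  next
    case 2 then show False using co_mono[of j i] assms cell_bounds[of i x y] cell_bounds[of j x' y] by linarith
  qed
qed

lemma piece_disj: "i < b \<Longrightarrow> j < b \<Longrightarrow> i \<noteq> j \<Longrightarrow> piece lams i \<inter> piece lams j = {}"
  using same_row by fastforce

lemma S_eq: "S = (\<Union>j<b. piece lams j)" by (simp add: skew_shape_def)

lemma S_fin: "finite S" unfolding S_eq piece_eq using Y_fin by auto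

lemma card_piece: "card (piece lams j) = q j"
  unfolding piece_eq using card_image[OF inj_on_subset[OF inj_tr subset_UNIV]] Y_card by simp

lemma S_card: "card S = (\<Sum>j<b. q j)"
  unfolding S_eq
  by (subst card_UN_disjoint) (use piece_disj S_fin card_piece Y_fin piece_eq in auto)

lemma nbc_piece:
  assumes "j < b"
  shows "nbc (ro j) (co j) (Y j) S"
  unfolding nbc_def
proof (intro allI impI conjI)
  fix x y assume xy: "(x, y) \<in> Y j"
  have inP: "(x + ro j, y + co j) \<in> piece lams j" using xy unfolding piece_eq by force
  have inj: "\<tau> j c \<in> \<tau> j ` Y j \<longleftrightarrow> c \<in> Y j" for c
    by (rule inj_image_mem_iff[OF inj_tr])
  show "(x + ro j, Suc y + co j) \<in> S \<longleftrightarrow> (x, Suc y) \<in> Y j"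
  proof
    assume "(x + ro j, Suc y + co j) \<in> S"
    then obtain i where i: "i < b" "(x + ro j, Suc y + co j) \<in> piece lams i" unfolding S_eq by auto
    then have "i = j" using same_row[OF i(1) assms i(2) inP] by simp
    then show "(x, Suc y) \<in> Y j" using i inj[of "(x, Suc y)"] unfolding piece_eq by simp
  next
    assume "(x, Suc y) \<in> Y j"
    then have "(x + ro j, Suc y + co j) \<in> piece lams j" unfolding piece_eq by force
    then show "(x + ro j, Suc y + co j) \<in> S" unfolding S_eq using assms by auto
  qed
  show "(Suc x + ro j, y + co j) \<in> S \<longleftrightarrow> (Suc x, y) \<in> Y j"
  proof
    assume "(Suc x + ro j, y + co j) \<in> S"
    then obtain i where i: "i < b" "(Suc x + ro j, y + co j) \<in> piece lams i" unfolding S_eq by auto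
    then have "i = j" using same_col[OF i(1) assms i(2) inP] by simp
    then show "(Suc x, y) \<in> Y j" using i inj[of "(Suc x, y)"] unfolding piece_eq by simp
  next
    assume "(Suc x, y) \<in> Y j"
    then have "(Suc x + ro j, y + co j) \<in> piece lams j" unfolding piece_eq by force
    then show "(Suc x + ro j, y + co j) \<in> S" unfolding S_eq using assms by auto
  qed
qed

lemma skew_union_at:
  assumes "j < b" "y \<in> Y j"
  shows "skew_union lams U (\<tau> j y) = U j y"
proof -
  obtain x1 y1 where y: "y = (x1, y1)" by (cases y)
  have inP: "\<tau> j y \<in> piece lams j" using assms(2) unfolding piece_eq by blast
  let ?g = "\<lambda>i. if (x1 + ro j, y1 + co j) \<in> piece lams i
      then U i (x1 + ro j - row_off lams i, y1 + co j - col_off lams i) else 0"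
  have "skew_union lams U (\<tau> j y) = sum ?g {..<b}"
    by (simp add: skew_union_def y)
  also have "\<dots> = ?g j + sum ?g ({..<b} - {j})" using assms(1) by (simp add: sum.remove)
  also have "sum ?g ({..<b} - {j}) = 0"
    using piece_disj[of _ j] inP assms(1) by (intro sum.neutral) (auto simp: y)
  finally show ?thesis using inP by (simp add: y ro_def co_def)
qed

lemma skew_union_out:
  assumes "x \<notin> S"
  shows "skew_union lams U x = 0"
  using assms unfolding skew_union_def S_eq by (cases x) (auto intro!: sum.neutral)

lemma S_cases:
  assumes "x \<in> S"
  obtains j y where "j < b" "y \<in> Y j" "x = \<tau> j y"
  using assms unfolding S_eq piece_eq by auto

lemma tau_inj: "\<tau> j y = \<tau> j y' \<longleftrightarrow> y = y'" by (rule inj_eq[OF inj_tr])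

lemma tau_in_S: "j < b \<Longrightarrow> y \<in> Y j \<Longrightarrow> \<tau> j y \<in> S"
  unfolding S_eq piece_eq by blast

lemma tau_piece_unique: "i < b \<Longrightarrow> j < b \<Longrightarrow> y \<in> Y i \<Longrightarrow> y' \<in> Y j \<Longrightarrow> \<tau> i y = \<tau> j y' \<Longrightarrow> i = j \<and> y = y'"
  by (metis disjoint_iff image_eqI piece_disj piece_eq tau_inj)

lemma skew_union_cong:
  assumes "\<And>j y. j < b \<Longrightarrow> y \<in> Y j \<Longrightarrow> F j y = G j y"
  shows "skew_union lams F = skew_union lams G"
proof
  fix x show "skew_union lams F x = skew_union lams G x"
  proof (cases "x \<in> S")
    case True
    then obtain j y where "j < b" "y \<in> Y j" "x = \<tau> j y" by (rule S_cases)
    then show ?thesis using skew_union_at assms by simp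
  qed (simp add: skew_union_out)
qed

end

lemma rel_in:
  assumes "lite Y U" "finite A" "card A = card Y" "y \<in> Y"
  shows "rel A U y = sl A ! (U y - 1)" "1 \<le> U y" "U y \<le> card Y" "rel A U y \<in> A"
proof -
  have "U y \<in> {1..card Y}" using assms(1,4) unfolding lite_def bij_betw_def by auto
  then show "1 \<le> U y" "U y \<le> card Y" by auto
  then show "rel A U y = sl A ! (U y - 1)" by (simp add: rel_def)
  then show "rel A U y \<in> A" using sl_nth_in[OF assms(2)] \<open>1 \<le> U y\<close> \<open>U y \<le> card Y\<close> assms(3) by simp
qed

lemma rel_image:
  assumes "lite Y U" "finite A" "card A = card Y"
  shows "rel A U ` Y = A"
proof -
  have U: "U ` Y = {1..card Y}" using assms(1) unfolding lite_def bij_betw_def by auto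
  have "rel A U ` Y = (\<lambda>v. sl A ! (v - 1)) ` (U ` Y)"
    by (auto simp: rel_in[OF assms] image_iff)
  also have "\<dots> = (\<lambda>v. sl A ! v) ` ((\<lambda>v. v - 1) ` {1..card Y})" unfolding U by (simp add: image_image)
  also have "(\<lambda>v. v - 1) ` {1..card Y} = {..<card A}"
  proof
    show "(\<lambda>v. v - 1) ` {1..card Y} \<subseteq> {..<card A}" using assms(3) by auto
    show "{..<card A} \<subseteq> (\<lambda>v. v - 1) ` {1..card Y}"
    proof
      fix x assume "x \<in> {..<card A}"
      then show "x \<in> (\<lambda>v. v - 1) ` {1..card Y}" using assms(3) by (intro image_eqI[of _ _ "x + 1"]) auto
    qed
  qed
  finally show ?thesis using sl_image[OF assms(2)] by simp
qed

lemma SYT_lite: "U \<in> SYT Y \<Longrightarrow> lite Y U"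
  by (simp add: SYT_def lite_def)

definition idx :: "nat set \<Rightarrow> nat \<Rightarrow> nat" where
  "idx A a = (THE v. v < card A \<and> sl A ! v = a)"

lemma idx_prop:
  assumes "finite A" "a \<in> A"
  shows "idx A a < card A" "sl A ! idx A a = a"
proof -
  have "a \<in> set (sl A)" using assms by simp
  then obtain v where v0: "v < length (sl A)" "sl A ! v = a" by (auto simp: in_set_conv_nth)
  then have v: "v < card A" "sl A ! v = a" by auto
  have "\<exists>!v. v < card A \<and> sl A ! v = a" using v sl_inj[OF assms(1)] by metis
  then have "idx A a < card A \<and> sl A ! idx A a = a" unfolding idx_def by (rule theI')
  then show "idx A a < card A" "sl A ! idx A a = a" by auto
qed

lemma idx_nth: "finite A \<Longrightarrow> v < card A \<Longrightarrow> idx A (sl A ! v) = v"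
  using idx_prop[of A "sl A ! v"] sl_nth_in sl_inj by metis

lemma idx_less: "finite A \<Longrightarrow> a \<in> A \<Longrightarrow> a' \<in> A \<Longrightarrow> a < a' \<Longrightarrow> idx A a < idx A a'"
  using idx_prop[of A a] idx_prop[of A a'] sl_strict_iff[of A "idx A a" "idx A a'"] by simp

context sk
begin

definition "N = (\<Sum>j<b. q j)"

definition valid :: "(nat \<Rightarrow> nat set) \<Rightarrow> (nat \<Rightarrow> tableau) \<Rightarrow> bool" where
  "valid A U \<longleftrightarrow> (\<forall>j<b. lite (Y j) (U j) \<and> A j \<subseteq> {1..N} \<and> card (A j) = q j)
     \<and> (\<forall>i<b. \<forall>j<b. i \<noteq> j \<longrightarrow> A i \<inter> A j = {}) \<and> (\<Union>j<b. A j) = {1..N}"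

definition assemble :: "(nat \<Rightarrow> nat set) \<Rightarrow> (nat \<Rightarrow> tableau) \<Rightarrow> tableau" where
  "assemble A U = skew_union lams (\<lambda>j. rel (A j) (U j))"

lemma card_S_N: "card S = N" by (simp add: S_card N_def)

lemma valid_fin: "valid A U \<Longrightarrow> j < b \<Longrightarrow> finite (A j)"
  unfolding valid_def by (meson finite_atLeastAtMost finite_subset)

lemma validD:
  assumes "valid A U" "j < b"
  shows "lite (Y j) (U j)" "A j \<subseteq> {1..N}" "card (A j) = q j"
  using assms unfolding valid_def by simp_all

lemma lite_out: "lite Z V \<Longrightarrow> y \<notin> Z \<Longrightarrow> V y = 0"
  unfolding lite_def by (cases y) auto

lemma assemble_at: "j < b \<Longrightarrow> y \<in> Y j \<Longrightarrow> assemble A U (\<tau> j y) = rel (A j) (U j) y"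
  by (simp add: assemble_def skew_union_at)

lemma assemble_out: "x \<notin> S \<Longrightarrow> assemble A U x = 0"
  by (simp add: assemble_def skew_union_out)

lemma assemble_piece_image:
  assumes "valid A U" "j < b"
  shows "assemble A U ` piece lams j = A j"
proof -
  have "assemble A U ` piece lams j = (\<lambda>y. assemble A U (\<tau> j y)) ` Y j"
    unfolding piece_eq by (simp add: image_image)
  also have "\<dots> = rel (A j) (U j) ` Y j"
    using assemble_at[OF assms(2)] by (intro image_cong) simp_all
  also have "\<dots> = A j"
    using rel_image[of "Y j" "U j" "A j"] validD[OF assms] valid_fin[OF assms] Y_card by simp
  finally show ?thesis .
qed

lemma assemble_lite:
  assumes "valid A U"
  shows "lite S (assemble A U)"
proof -
  have im: "assemble A U ` S = {1..N}"
    unfolding S_eq image_UN using assemble_piece_image[OF assms] assms by (simp add: valid_def)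
  then have "inj_on (assemble A U) S" using S_fin card_S_N by (intro eq_card_imp_inj_on) simp_all
  then show ?thesis using im assemble_out unfolding lite_def bij_betw_def card_S_N by blast
qed

lemma assemble_SYT:
  assumes "valid A U" "\<forall>j<b. U j \<in> SYT (Y j)"
  shows "assemble A U \<in> SYT S"
proof -
  have L: "lite S (assemble A U)" by (rule assemble_lite[OF assms(1)])
  have fin: "j < b \<Longrightarrow> finite (A j)" for j using valid_fin[OF assms(1)] .
  have cA: "j < b \<Longrightarrow> card (A j) = card (Y j)" for j using validD(3)[OF assms(1)] Y_card by simp
  have lU: "j < b \<Longrightarrow> lite (Y j) (U j)" for j using assms(2) SYT_lite by simp
  have mono: "rel (A j) (U j) y < rel (A j) (U j) y'"
    if "j < b" "y \<in> Y j" "y' \<in> Y j" "U j y < U j y'" for j y y'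
  proof -
    note r = rel_in[OF lU[OF that(1)] fin[OF that(1)] cA[OF that(1)]]
    show ?thesis using r[OF that(2)] r[OF that(3)] that(4) sl_strict[OF fin[OF that(1)], of "U j y - 1" "U j y' - 1"] cA[OF that(1)]
      by simp
  qed
  have rows: "assemble A U (i, j1) < assemble A U (i, j2)"
    if h: "(i, j1) \<in> S" "(i, j2) \<in> S" "j1 < j2" for i j1 j2
  proof -
    obtain p y where p: "p < b" "y \<in> Y p" "(i, j1) = \<tau> p y" using h(1) by (rule S_cases)
    obtain p' y' where p': "p' < b" "y' \<in> Y p'" "(i, j2) = \<tau> p' y'" using h(2) by (rule S_cases)
    have "(i, j1) \<in> piece lams p" "(i, j2) \<in> piece lams p'" using p p' unfolding piece_eq by auto
    then have pp: "p = p'" using same_row p(1) p'(1) by blast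
    obtain x1 y1 where y: "y = (x1, y1)" by (cases y)
    obtain x2 y2 where y': "y' = (x2, y2)" by (cases y')
    have "x1 = x2" "y1 < y2" using p(3) p'(3) pp h(3) by (auto simp: y y')
    then have "U p y < U p y'" using assms(2) p(1,2) p'(2) pp unfolding SYT_def y y' by blast
    then show ?thesis using mono p p' pp assemble_at by metis
  qed
  have cols: "assemble A U (i1, j) < assemble A U (i2, j)"
    if h: "(i1, j) \<in> S" "(i2, j) \<in> S" "i1 < i2" for i1 i2 j
  proof -
    obtain p y where p: "p < b" "y \<in> Y p" "(i1, j) = \<tau> p y" using h(1) by (rule S_cases)
    obtain p' y' where p': "p' < b" "y' \<in> Y p'" "(i2, j) = \<tau> p' y'" using h(2) by (rule S_cases)
    have "(i1, j) \<in> piece lams p" "(i2, j) \<in> piece lams p'" using p p' unfolding piece_eq by auto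
    then have pp: "p = p'" using same_col p(1) p'(1) by blast
    obtain x1 y1 where y: "y = (x1, y1)" by (cases y)
    obtain x2 y2 where y': "y' = (x2, y2)" by (cases y')
    have "y1 = y2" "x1 < x2" using p(3) p'(3) pp h(3) by (auto simp: y y')
    then have "U p y < U p y'" using assms(2) p(1,2) p'(2) pp unfolding SYT_def y y' by blast
    then show ?thesis using mono p p' pp assemble_at by metis
  qed
  show ?thesis using L rows cols unfolding SYT_def lite_def by blast
qed

lemma assemble_unique:
  assumes "valid A U" "valid A' U'" "assemble A U = assemble A' U'" "j < b"
  shows "A j = A' j" "U j = U' j"
proof -
  have i1: "assemble A U ` piece lams j = A j" by (rule assemble_piece_image[OF assms(1,4)])
  have i2: "assemble A' U' ` piece lams j = A' j" by (rule assemble_piece_image[OF assms(2,4)])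
  show AA: "A j = A' j" using i1 i2 unfolding assms(3) by (rule trans[OF sym])
  have fin: "finite (A j)" using valid_fin[OF assms(1,4)] .
  have cA: "card (A j) = card (Y j)" using validD(3)[OF assms(1,4)] Y_card by simp
  have l1: "lite (Y j) (U j)" "lite (Y j) (U' j)" using validD(1)[OF assms(1,4)] validD(1)[OF assms(2,4)] by simp_all
  show "U j = U' j"
  proof
    fix y show "U j y = U' j y"
    proof (cases "y \<in> Y j")
      case True
      have e0: "rel (A j) (U j) y = rel (A' j) (U' j) y"
        using assemble_at[OF assms(4) True, of A U] assemble_at[OF assms(4) True, of A' U'] assms(3) by simp
      then have e: "rel (A j) (U j) y = rel (A j) (U' j) y" unfolding AA .
      note r1 = rel_in[OF l1(1) fin cA True] and r2 = rel_in[OF l1(2) fin cA True]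
      have "sl (A j) ! (U j y - 1) = sl (A j) ! (U' j y - 1)" using e unfolding r1(1) r2(1) .
      moreover have "U j y - 1 < card (A j)" "U' j y - 1 < card (A j)" using r1(2,3) r2(2,3) cA by linarith+
      ultimately have "U j y - 1 = U' j y - 1" using sl_inj[OF fin] by blast
      then show ?thesis using r1 r2 by simp
    next
      case False then show ?thesis using lite_out[OF l1(1) False] lite_out[OF l1(2) False] by simp
    qed
  qed
qed

lemma decompose:
  assumes T: "T \<in> SYT S"
  shows "\<exists>A U. valid A U \<and> (\<forall>j<b. U j \<in> SYT (Y j)) \<and> T = assemble A U"
proof -
  have z: "\<forall>c. c \<notin> S \<longrightarrow> T c = 0" and bij: "bij_betw T S {1..card S}"
    and rw: "\<forall>i j j'. (i, j) \<in> S \<and> (i, j') \<in> S \<and> j < j' \<longrightarrow> T (i, j) < T (i, j')"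
    and cl: "\<forall>i i' j. (i, j) \<in> S \<and> (i', j) \<in> S \<and> i < i' \<longrightarrow> T (i, j) < T (i', j)"
    using T unfolding SYT_def by auto
  have inj: "inj_on T S" and im: "T ` S = {1..N}" using bij card_S_N unfolding bij_betw_def by auto
  define A where "A j = T ` piece lams j" for j
  define U where "U j = (\<lambda>y. if y \<in> Y j then idx (A j) (T (\<tau> j y)) + 1 else 0)" for j
  have PS: "j < b \<Longrightarrow> piece lams j \<subseteq> S" for j unfolding S_eq by auto
  have finA: "finite (A j)" for j unfolding A_def piece_eq using Y_fin by simp
  have cardA: "j < b \<Longrightarrow> card (A j) = q j" for j
    unfolding A_def using card_image[OF inj_on_subset[OF inj PS]] card_piece by simp
  have TA: "j < b \<Longrightarrow> y \<in> Y j \<Longrightarrow> T (\<tau> j y) \<in> A j" for j y unfolding A_def piece_eq by blast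
  have Uval: "U j y = idx (A j) (T (\<tau> j y)) + 1" if "y \<in> Y j" for j y using that by (simp add: U_def)
  have lU: "lite (Y j) (U j)" if j: "j < b" for j
  proof -
    have "U j ` Y j = (\<lambda>y. idx (A j) (T (\<tau> j y)) + 1) ` Y j"
      by (intro image_cong) (simp_all add: U_def)
    also have "\<dots> = (\<lambda>v. v + 1) ` (idx (A j) ` (T ` (\<tau> j ` Y j)))" by (simp add: image_image)
    also have "T ` (\<tau> j ` Y j) = A j" unfolding A_def piece_eq ..
    also have "idx (A j) ` A j = {..<card (A j)}"
    proof
      show "idx (A j) ` A j \<subseteq> {..<card (A j)}" using idx_prop[OF finA] by auto
      show "{..<card (A j)} \<subseteq> idx (A j) ` A j"
      proof
        fix v assume "v \<in> {..<card (A j)}"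
        then show "v \<in> idx (A j) ` A j" using idx_nth[OF finA] sl_nth_in[OF finA]
          by (intro image_eqI[of _ _ "sl (A j) ! v"]) auto
      qed
    qed
    also have "(\<lambda>v. v + 1) ` {..<card (A j)} = {1..card (Y j)}"
    proof
      show "(\<lambda>v. v + 1) ` {..<card (A j)} \<subseteq> {1..card (Y j)}" using cardA[OF j] Y_card by auto
      show "{1..card (Y j)} \<subseteq> (\<lambda>v. v + 1) ` {..<card (A j)}"
      proof
        fix v assume "v \<in> {1..card (Y j)}"
        then show "v \<in> (\<lambda>v. v + 1) ` {..<card (A j)}" using cardA[OF j] Y_card
          by (intro image_eqI[of _ _ "v - 1"]) auto
      qed
    qed
    finally have im2: "U j ` Y j = {1..card (Y j)}" .
    then have "inj_on (U j) (Y j)" using Y_fin by (intro eq_card_imp_inj_on) simp_all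
    then show ?thesis using im2 unfolding lite_def bij_betw_def by (simp add: U_def)
  qed
  have valid: "valid A U"
    unfolding valid_def
  proof (intro conjI allI impI)
    fix j assume j: "j < b"
    show "lite (Y j) (U j)" by (rule lU[OF j])
    show "A j \<subseteq> {1..N}" unfolding A_def using PS[OF j] im by blast
    show "card (A j) = q j" by (rule cardA[OF j])
  next
    fix i j assume "i < b" "j < b" "i \<noteq> j"
    then have "T ` (piece lams i \<inter> piece lams j) = T ` piece lams i \<inter> T ` piece lams j"
      using inj_on_image_Int[OF inj PS[of i] PS[of j]] by simp
    then show "A i \<inter> A j = {}"
      unfolding A_def using piece_disj[of i j] \<open>i < b\<close> \<open>j < b\<close> \<open>i \<noteq> j\<close> by simp
  next
    have "(\<Union>j<b. A j) = T ` (\<Union>j<b. piece lams j)" unfolding A_def by (simp add: image_UN)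
    then show "(\<Union>j<b. A j) = {1..N}" using im S_eq by simp
  qed
  have eq: "T = assemble A U"
  proof
    fix x show "T x = assemble A U x"
    proof (cases "x \<in> S")
      case True
      then obtain j y where jy: "j < b" "y \<in> Y j" "x = \<tau> j y" by (rule S_cases)
      have "assemble A U x = rel (A j) (U j) y" using assemble_at[OF jy(1,2)] jy(3) by simp
      also have "\<dots> = sl (A j) ! idx (A j) (T (\<tau> j y))"
        unfolding rel_def Uval[OF jy(2)] by simp
      also have "\<dots> = T x" using idx_prop(2)[OF finA TA[OF jy(1,2)]] jy(3) by simp
      finally show ?thesis by simp
    next
      case False
      have "T x = 0" using z False by blast
      then show ?thesis using assemble_out[OF False] by simp
    qed
  qed
  have syt: "U j \<in> SYT (Y j)" if j: "j < b" for j
  proof -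
    have r: "U j (x, y1) < U j (x, y2)" if "(x, y1) \<in> Y j" "(x, y2) \<in> Y j" "y1 < y2" for x y1 y2
    proof -
      have "y1 + co j < y2 + co j" using that(3) by simp
      have m: "(x + ro j, y1 + co j) \<in> S" "(x + ro j, y2 + co j) \<in> S"
        using tau_in_S[OF j that(1)] tau_in_S[OF j that(2)] by simp_all
      have "T (x + ro j, y1 + co j) < T (x + ro j, y2 + co j)"
        using rw m \<open>y1 + co j < y2 + co j\<close> by blast
      then show ?thesis using idx_less[OF finA TA[OF j that(1)] TA[OF j that(2)]]
        by (simp add: Uval[OF that(1)] Uval[OF that(2)])
    qed
    have c: "U j (x1, y) < U j (x2, y)" if "(x1, y) \<in> Y j" "(x2, y) \<in> Y j" "x1 < x2" for x1 x2 y
    proof -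
      have "x1 + ro j < x2 + ro j" using that(3) by simp
      have m: "(x1 + ro j, y + co j) \<in> S" "(x2 + ro j, y + co j) \<in> S"
        using tau_in_S[OF j that(1)] tau_in_S[OF j that(2)] by simp_all
      have "T (x1 + ro j, y + co j) < T (x2 + ro j, y + co j)"
        using cl m \<open>x1 + ro j < x2 + ro j\<close> by blast
      then show ?thesis using idx_less[OF finA TA[OF j that(1)] TA[OF j that(2)]]
        by (simp add: Uval[OF that(1)] Uval[OF that(2)])
    qed
    have l: "(\<forall>c. c \<notin> Y j \<longrightarrow> U j c = 0)" "bij_betw (U j) (Y j) {1..card (Y j)}"
      using lU[OF j] unfolding lite_def by auto
    show ?thesis unfolding SYT_def mem_Collect_eq
    proof (intro conjI)
      show "\<forall>c. c \<notin> Y j \<longrightarrow> U j c = 0" by (fact l(1))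
      show "bij_betw (U j) (Y j) {1..card (Y j)}" by (fact l(2))
      show "\<forall>i ja j'. (i, ja) \<in> Y j \<and> (i, j') \<in> Y j \<and> ja < j' \<longrightarrow> U j (i, ja) < U j (i, j')"
        using r by blast
      show "\<forall>i i' ja. (i, ja) \<in> Y j \<and> (i', ja) \<in> Y j \<and> i < i' \<longrightarrow> U j (i, ja) < U j (i', ja)"
        using c by blast
    qed
  qed
  have "valid A U \<and> (\<forall>j<b. U j \<in> SYT (Y j)) \<and> T = assemble A U" using valid syt eq by simp
  then show ?thesis by blast
qed

end

lemma rotn_range: "a \<in> {1..n} \<Longrightarrow> t \<le> n \<Longrightarrow> rotn n t a \<in> {1..n}"
  by (auto simp: rotn_def)

lemma rotn_inj: "t \<le> n \<Longrightarrow> inj_on (rotn n t) {1..n}"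
  by (auto simp: inj_on_def rotn_def split: if_splits)

lemma rotn_surj: assumes "t \<le> n" shows "rotn n t ` {1..n} = {1..n}"
proof -
  have "rotn n t ` {1..n} \<subseteq> {1..n}" using rotn_range assms by auto
  moreover have "card (rotn n t ` {1..n}) = card {1..n}" using card_image[OF rotn_inj[OF assms]] .
  ultimately show ?thesis by (simp add: card_subset_eq)
qed

lemma rotn_0: "1 \<le> a \<Longrightarrow> rotn n 0 a = a" by (simp add: rotn_def)

lemma rotn_Suc: "a \<in> {1..n} \<Longrightarrow> t < n \<Longrightarrow> rotn n 1 (rotn n t a) = rotn n (Suc t) a"
  by (auto simp: rotn_def)

lemma rotn_one: "a \<in> {1..n} \<Longrightarrow> t < n \<Longrightarrow> rotn n t a = 1 \<longleftrightarrow> a = Suc t"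
  by (auto simp: rotn_def)

context sk
begin

lemma piece_sub: "j < b \<Longrightarrow> piece lams j \<subseteq> S" unfolding S_eq by auto

lemma cardY_le: "j < b \<Longrightarrow> card (Y j) \<le> card S"
  using card_mono[OF S_fin piece_sub] card_piece Y_card by metis

lemma valid_rot:
  assumes "valid A U" "0 < N"
    and lU: "\<And>j. j < b \<Longrightarrow> lite (Y j) (U' j)"
  shows "valid (\<lambda>j. rotn N 1 ` A j) U'"
  unfolding valid_def
proof (intro conjI allI impI)
  have inj: "inj_on (rotn N 1) {1..N}" using rotn_inj assms(2) by simp
  fix j assume j: "j < b"
  show "lite (Y j) (U' j)" by (rule lU[OF j])
  show "rotn N 1 ` A j \<subseteq> {1..N}" using validD(2)[OF assms(1) j] rotn_range assms(2) by auto
  show "card (rotn N 1 ` A j) = q j"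
    using card_image[OF inj_on_subset[OF inj validD(2)[OF assms(1) j]]] validD(3)[OF assms(1) j] by simp
next
  have inj: "inj_on (rotn N 1) {1..N}" using rotn_inj assms(2) by simp
  fix i j assume "i < b" "j < b" "i \<noteq> j"
  then have "A i \<inter> A j = {}" using assms(1) unfolding valid_def by blast
  then show "rotn N 1 ` A i \<inter> rotn N 1 ` A j = {}"
    using inj_on_image_Int[OF inj validD(2)[OF assms(1) \<open>i < b\<close>] validD(2)[OF assms(1) \<open>j < b\<close>]] by simp
next
  have "(\<Union>j<b. rotn N 1 ` A j) = rotn N 1 ` (\<Union>j<b. A j)" by (simp add: image_UN)
  also have "(\<Union>j<b. A j) = {1..N}" using assms(1) unfolding valid_def by blast
  finally show "(\<Union>j<b. rotn N 1 ` A j) = {1..N}" using rotn_surj assms(2) by simp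
qed

lemma pr_assemble:
  assumes V: "valid A U" and N0: "0 < N"
  shows "promotion S (assemble A U) = assemble (\<lambda>j. rotn N 1 ` A j) (\<lambda>j. if 1 \<in> A j then promotion (Y j) (U j) else U j)"
    "valid (\<lambda>j. rotn N 1 ` A j) (\<lambda>j. if 1 \<in> A j then promotion (Y j) (U j) else U j)"
proof -
  define T where "T = assemble A U"
  define U2 where "U2 = (\<lambda>j. if 1 \<in> A j then promotion (Y j) (U j) else U j)"
  have LT: "lite S T" unfolding T_def by (rule assemble_lite[OF V])
  have "1 \<in> (\<Union>j<b. A j)" using V N0 unfolding valid_def by auto
  then obtain j0 where j0: "j0 < b" "1 \<in> A j0" by auto
  have uniq: "j < b \<Longrightarrow> 1 \<in> A j \<Longrightarrow> j = j0" for j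
    using V j0 unfolding valid_def by blast
  have finA: "finite (A j0)" by (rule valid_fin[OF V j0(1)])
  have cA: "card (A j0) = card (Y j0)" using validD(3)[OF V j0(1)] Y_card by simp
  have AN: "A j0 \<subseteq> {1..N}" by (rule validD(2)[OF V j0(1)])
  have lU0: "lite (Y j0) (U j0)" by (rule validD(1)[OF V j0(1)])
  have cY: "card (Y j0) \<ge> 1" using q_pos[OF j0(1)] Y_card by (simp add: Suc_le_eq)
  define u0 where "u0 = (THE u. u \<in> Y j0 \<and> U j0 u = 1)"
  have u0: "u0 \<in> Y j0" "U j0 u0 = 1" using lite_the[OF Y_fin Y_ne[OF j0(1)] lU0] by (auto simp: u0_def)
  have MinA: "Min (A j0) = 1" using AN j0(2) finA by (intro Min_eqI) auto
  have sl0: "sl (A j0) ! 0 = 1"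
  proof -
    have "A j0 \<noteq> {}" using j0(2) by auto
    then have "sl (A j0) = 1 # sl (A j0 - {1})" using sorted_list_of_set_nonempty[OF finA] MinA by simp
    then show ?thesis by simp
  qed
  have Tc0: "T (\<tau> j0 u0) = 1"
    unfolding T_def assemble_at[OF j0(1) u0(1)] using u0(2) sl0 by (simp add: rel_def)
  define c0 where "c0 = \<tau> j0 u0"
  have c0S: "c0 \<in> S" unfolding c0_def by (rule tau_in_S[OF j0(1) u0(1)])
  have the_c0: "(THE c. c \<in> S \<and> T c = 1) = c0"
    using lite_the_eq[OF S_fin LT c0S] Tc0 by (simp add: c0_def)
  define f where "f = ext (A j0)"
  have "0 \<notin> A j0" using AN by auto
  then have sm: "strict_mono f" unfolding f_def using ext_strict_mono[OF finA] by simp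
  have f0: "f 0 = 0" by (simp add: f_def)
  have r0: "simrel (ro j0) (co j0) (Y j0) f (T(c0 := 0)) (T(c0 := 0), \<tau> j0 u0) ((U j0)(u0 := 0), u0)"
    unfolding simrel_def
  proof (intro conjI ballI allI impI)
    show "snd (T(c0 := 0), \<tau> j0 u0) = \<tau> j0 (snd ((U j0)(u0 := 0), u0))" by simp
    show "snd ((U j0)(u0 := 0), u0) \<in> Y j0" using u0 by simp
  next
    fix y assume y: "y \<in> Y j0"
    show "fst (T(c0 := 0), \<tau> j0 u0) (\<tau> j0 y) = f (fst ((U j0)(u0 := 0), u0) y)"
    proof (cases "y = u0")
      case True then show ?thesis by (simp add: c0_def f0)
    next
      case False
      then have "\<tau> j0 y \<noteq> c0" unfolding c0_def using tau_inj by simp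
      moreover have "U j0 y \<le> card (A j0)" using rel_in(3)[OF lU0 finA cA y] cA by simp
      ultimately show ?thesis using False unfolding T_def f_def
        by (simp add: assemble_at[OF j0(1) y] rel_ext)
    qed
  qed simp
  obtain T' cF where eS: "(slide_step S ^^ card S) (T(c0 := 0), c0) = (T', cF)"
    by (cases "(slide_step S ^^ card S) (T(c0 := 0), c0)")
  obtain U' uF where eY: "(slide_step (Y j0) ^^ card (Y j0)) ((U j0)(u0 := 0), u0) = (U', uF)"
    by (cases "(slide_step (Y j0) ^^ card (Y j0)) ((U j0)(u0 := 0), u0)")
  have eY': "(slide_step (Y j0) ^^ card S) ((U j0)(u0 := 0), u0) = (U', uF)"
    using slide_iter_eq[OF Y_fin _ cardY_le[OF j0(1)], of "((U j0)(u0 := 0), u0)"] u0 eY by simp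
  have rF: "simrel (ro j0) (co j0) (Y j0) f (T(c0 := 0)) (T', cF) (U', uF)"
    using slide_sim_iter[OF nbc_piece[OF j0(1)] sm f0 r0, of "card S"] eS eY' by (simp add: c0_def)
  have cF: "cF = \<tau> j0 uF" and uF: "uF \<in> Y j0"
    and inP: "\<And>y. y \<in> Y j0 \<Longrightarrow> T' (\<tau> j0 y) = f (U' y)"
    and outP: "\<And>x. x \<notin> \<tau> j0 ` Y j0 \<Longrightarrow> T' x = (T(c0 := 0)) x"
    using rF unfolding simrel_def by auto
  have sv: "slinv (Y j0) {2..card (Y j0)} (U', uF)"
    using slinv_iter[OF slinv_start[OF Y_fin lU0 u0], of "card (Y j0)"] eY by simp
  have U'r: "U' y \<in> {2..card (Y j0)}" if "y \<in> Y j0" "y \<noteq> uF" for y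
    using sv that unfolding slinv_def bij_betw_def by auto
  have prS: "promotion S T = (\<lambda>x. if x \<in> S then (if x = cF then card S else T' x - 1) else 0)"
    unfolding promotion_unfold the_c0 eS prod.sel ..
  have the_u0: "(THE u. u \<in> Y j0 \<and> U j0 u = 1) = u0" by (simp add: u0_def)
  have prY: "promotion (Y j0) (U j0) = (\<lambda>x. if x \<in> Y j0 then (if x = uF then card (Y j0) else U' x - 1) else 0)"
    unfolding promotion_unfold the_u0 eY prod.sel ..
  have cSN: "card S = N" by (rule card_S_N)
  show "promotion S (assemble A U) = assemble (\<lambda>j. rotn N 1 ` A j) (\<lambda>j. if 1 \<in> A j then promotion (Y j) (U j) else U j)"
    unfolding T_def[symmetric] U2_def[symmetric]
  proof
    fix x show "promotion S T x = assemble (\<lambda>j. rotn N 1 ` A j) U2 x"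
    proof (cases "x \<in> S")
      case False then show ?thesis using prS assemble_out by simp
    next
      case True
      then obtain j y where jy: "j < b" "y \<in> Y j" "x = \<tau> j y" by (rule S_cases)
      have rhs: "assemble (\<lambda>j. rotn N 1 ` A j) U2 x = rel (rotn N 1 ` A j) (U2 j) y"
        using assemble_at[OF jy(1,2)] jy(3) by simp
      show ?thesis
      proof (cases "j = j0")
        case True
        note jj = True
        have U2j: "U2 j = promotion (Y j0) (U j0)" using True j0 by (simp add: U2_def)
        show ?thesis
        proof (cases "y = uF")
          case True
          have "promotion S T x = N" using prS jy \<open>x \<in> S\<close> cF True jj cSN by simp
          moreover have "rel (rotn N 1 ` A j) (U2 j) y = N"
            using U2j prY True uF jj rot_in_A(2)[OF finA AN j0(2)] cA cY by (simp add: rel_def)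
          ultimately show ?thesis using rhs by simp
        next
          case False
          have "x \<noteq> cF" using cF jy(3) jj False tau_inj by simp
          then have "promotion S T x = T' x - 1" using prS \<open>x \<in> S\<close> by simp
          also have "\<dots> = f (U' y) - 1" using inP jy jj by simp
          also have "f (U' y) = sl (A j0) ! (U' y - 1)"
            using U'r[OF _ False] jy jj cA by (simp add: f_def ext_def)
          finally have l: "promotion S T x = sl (A j0) ! (U' y - 1) - 1" .
          have "U2 j y = U' y - 1" using U2j prY jy jj False by simp
          then have "rel (rotn N 1 ` A j) (U2 j) y = sl (rotn N 1 ` A j0) ! (U' y - 1 - 1)"
            using U'r[OF _ False] jy jj by (simp add: rel_def)
          also have "\<dots> = sl (A j0) ! (U' y - 1) - 1"
          proof -
            have b2: "2 \<le> U' y" "U' y \<le> card (A j0)" using U'r[OF _ False] jy jj cA by auto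
            have "1 \<le> U' y - 1" "U' y - 1 < card (A j0)" using b2 by arith+
            from rot_in_A(3)[OF finA AN j0(2) this] show ?thesis using jj by (simp add: diff_diff_add)
          qed
          finally show ?thesis using rhs l by simp
        qed
      next
        case False
        then have n1: "1 \<notin> A j" using uniq jy(1) by blast
        have U2j: "U2 j = U j" using n1 by (simp add: U2_def)
        have xn: "x \<notin> \<tau> j0 ` Y j0"
        proof
          assume "x \<in> \<tau> j0 ` Y j0"
          then obtain y' where "y' \<in> Y j0" "x = \<tau> j0 y'" by blast
          then show False using tau_piece_unique[OF jy(1) j0(1) jy(2)] jy(3) False by metis
        qed
        then have "x \<noteq> cF" using cF uF by blast
        have "x \<noteq> c0" using xn c0_def u0 by blast
        have finj: "finite (A j)" by (rule valid_fin[OF V jy(1)])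
        have cAj: "card (A j) = card (Y j)" using validD(3)[OF V jy(1)] Y_card by simp
        note ri = rel_in[OF validD(1)[OF V jy(1)] finj cAj jy(2)]
        have "promotion S T x = T' x - 1" using prS \<open>x \<in> S\<close> \<open>x \<noteq> cF\<close> by simp
        also have "\<dots> = T x - 1" using outP[OF xn] \<open>x \<noteq> c0\<close> by simp
        also have "T x = sl (A j) ! (U j y - 1)" unfolding T_def jy(3) assemble_at[OF jy(1,2)] ri(1) ..
        finally have l: "promotion S T x = sl (A j) ! (U j y - 1) - 1" .
        have "rel (rotn N 1 ` A j) (U2 j) y = sl (rotn N 1 ` A j) ! (U j y - 1)"
          using U2j ri by (simp add: rel_def)
        also have "\<dots> = sl (A j) ! (U j y - 1) - 1"
          using rot_notin_A(2)[OF finj validD(2)[OF V jy(1)] n1, of "U j y - 1"] ri cAj by simp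
        finally show ?thesis using rhs l by simp
      qed
    qed
  qed
  show "valid (\<lambda>j. rotn N 1 ` A j) (\<lambda>j. if 1 \<in> A j then promotion (Y j) (U j) else U j)"
    using V N0
  proof (rule valid_rot)
    fix j assume "j < b"
    then show "lite (Y j) (if 1 \<in> A j then promotion (Y j) (U j) else U j)"
      using promotion_lite[OF Y_fin Y_ne validD(1)[OF V]] validD(1)[OF V] by simp
  qed
qed

end

definition per :: "nat \<Rightarrow> nat \<Rightarrow> nat set \<Rightarrow> nat set" where
  "per k m M = (\<lambda>(i, a). i * m + a) ` ({..<k} \<times> M)"

lemma per_char:
  assumes "M \<subseteq> {1..m}" "0 < m"
  shows "x \<in> per k m M \<longleftrightarrow> 1 \<le> x \<and> x \<le> k * m \<and> (x - 1) mod m + 1 \<in> M"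
proof
  assume "x \<in> per k m M"
  then obtain i a where ia: "i < k" "a \<in> M" "x = i * m + a" unfolding per_def by auto
  have a: "1 \<le> a" "a \<le> m" using ia(2) assms(1) by auto
  obtain c where c: "a = Suc c" using a by (cases a) auto
  have "x - 1 = i * m + c" using ia(3) c by simp
  then have "(x - 1) mod m = c" using a c by simp
  then have "(x - 1) mod m = a - 1" using c by simp
  moreover have "x \<le> k * m"
  proof -
    have "i * m + a \<le> i * m + m" using a by simp
    also have "\<dots> = Suc i * m" by simp
    also have "\<dots> \<le> k * m" using ia(1) by (intro mult_le_mono1) simp
    finally show ?thesis using ia(3) by simp
  qed
  ultimately show "1 \<le> x \<and> x \<le> k * m \<and> (x - 1) mod m + 1 \<in> M" using a ia by simp
next
  assume h: "1 \<le> x \<and> x \<le> k * m \<and> (x - 1) mod m + 1 \<in> M"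
  define i where "i = (x - 1) div m"
  define a where "a = (x - 1) mod m + 1"
  have x: "x = i * m + a" using h unfolding i_def a_def by (metis add.commute add_diff_inverse_nat div_mult_mod_eq group_cancel.add1 less_one not_less)
  have "x - 1 < k * m" using h by arith
  then have "i < k" unfolding i_def by (simp add: div_less_iff_less_mult assms(2))
  moreover have "a \<in> M" using h a_def by simp
  ultimately show "x \<in> per k m M" unfolding per_def using x by (intro image_eqI[of _ _ "(i, a)"]) auto
qed

lemma per_sub: "M \<subseteq> {1..m} \<Longrightarrow> 0 < m \<Longrightarrow> per k m M \<subseteq> {1..k * m}"
  using per_char by auto

lemma per_inj: "M \<subseteq> {1..m::nat} \<Longrightarrow> inj_on (\<lambda>(i, a). i * m + a) ({..<k::nat} \<times> M)"
proof (rule inj_onI, clarify)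
  fix i a i' a' :: nat assume M: "M \<subseteq> {1..m}" and h: "a \<in> M" "a' \<in> M" "i * m + a = i' * m + a'"
  have a: "1 \<le> a" "a \<le> m" "1 \<le> a'" "a' \<le> m" using h M by auto
  obtain c c' where c: "a = Suc c" "a' = Suc c'" using a by (cases a; cases a') auto
  have e1: "i * m + c = i' * m + c'" using h(3) c by simp
  have "(i * m + c) div m = i" using a c by simp
  moreover have "(i' * m + c') div m = i'" using a c by simp
  ultimately have "i = i'" using e1 by simp
  then show "i = i' \<and> a = a'" using h(3) by simp
qed

lemma per_card: "M \<subseteq> {1..m} \<Longrightarrow> card (per k m M) = k * card M"
  unfolding per_def by (subst card_image[OF per_inj]) (simp_all add: card_cartesian_product)

lemma per_rot:
  assumes "M \<subseteq> {1..m}" "0 < m" "0 < k"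
  shows "rotn (k * m) m ` per k m M = per k m M"
proof -
  let ?n = "k * m"
  have mn: "m \<le> ?n" using assms(3) by simp
  have sub: "rotn ?n m ` per k m M \<subseteq> per k m M"
  proof
    fix y assume "y \<in> rotn ?n m ` per k m M"
    then obtain x where x: "x \<in> per k m M" "y = rotn ?n m x" by blast
    have xc: "1 \<le> x" "x \<le> ?n" "(x - 1) mod m + 1 \<in> M" using per_char[OF assms(1,2)] x(1) by auto
    have yr: "y \<in> {1..?n}" using rotn_range[of x ?n m] xc mn x(2) by simp
    have "(y - 1) mod m = (x - 1) mod m"
    proof (cases "m < x")
      case True
      then have "y = x - m" using x(2) by (simp add: rotn_def)
      then have "x - 1 = (y - 1) + m" using True by simp
      then show ?thesis by simp
    next
      case False
      then have "y = x + ?n - m" using x(2) by (simp add: rotn_def)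
      then have "y - 1 = (x - 1) + (k - 1) * m" using xc mn assms(3)
        by (simp add: diff_mult_distrib)
      then show ?thesis by simp
    qed
    then show "y \<in> per k m M" using per_char[OF assms(1,2)] yr xc by simp
  qed
  have "card (rotn ?n m ` per k m M) = card (per k m M)"
    using card_image[OF inj_on_subset[OF rotn_inj[OF mn] per_sub[OF assms(1,2)]]] .
  moreover have "finite (per k m M)" using per_sub[OF assms(1,2)] finite_subset by blast
  ultimately show ?thesis using sub card_subset_eq by metis
qed

lemma rot_per:
  assumes "A \<subseteq> {1..k * m}" "0 < m" "0 < k" "rotn (k * m) m ` A = A"
  shows "A = per k m (A \<inter> {1..m})"
proof -
  let ?n = "k * m"
  have mn: "m \<le> ?n" using assms(3) by simp
  have inj: "inj_on (rotn ?n m) {1..?n}" by (rule rotn_inj[OF mn])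
  have step: "x \<in> A \<longleftrightarrow> rotn ?n m x \<in> A" if "x \<in> {1..?n}" for x
  proof
    assume "x \<in> A" then show "rotn ?n m x \<in> A" using assms(4) by blast
  next
    assume "rotn ?n m x \<in> A"
    then have "rotn ?n m x \<in> rotn ?n m ` A" using assms(4) by simp
    then obtain x' where x': "x' \<in> A" "rotn ?n m x = rotn ?n m x'" by auto
    have "x' \<in> {1..?n}" using x'(1) assms(1) by blast
    then have "x = x'" using inj_onD[OF inj x'(2) that] by simp
    then show "x \<in> A" using \<open>x' \<in> A\<close> by simp
  qed
  have red: "x \<in> {1..?n} \<longrightarrow> (x \<in> A \<longleftrightarrow> (x - 1) mod m + 1 \<in> A)" for x
  proof (induction x rule: less_induct)
    case (less x)
    show ?case
    proof
      assume x: "x \<in> {1..?n}"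
      show "x \<in> A \<longleftrightarrow> (x - 1) mod m + 1 \<in> A"
      proof (cases "m < x")
        case False
        then have "x - 1 < m" using x by auto
        then have "(x - 1) mod m + 1 = x" using x by simp
        then show ?thesis by simp
      next
        case True
        then have r: "rotn ?n m x = x - m" by (simp add: rotn_def)
        have x': "x - m \<in> {1..?n}" "x - m < x" using True x assms(2) by auto
        have "x \<in> A \<longleftrightarrow> x - m \<in> A" using step[OF x] r by simp
        also have "\<dots> \<longleftrightarrow> (x - m - 1) mod m + 1 \<in> A" using less.IH[OF x'(2)] x'(1) by simp
        also have "(x - m - 1) mod m = (x - 1) mod m"
        proof -
          have "x - 1 = (x - m - 1) + m" using True by simp
          then show ?thesis by simp
        qed
        finally show ?thesis .
      qed
    qed
  qed
  show ?thesis
  proof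
    show "A \<subseteq> per k m (A \<inter> {1..m})"
    proof
      fix x assume xA: "x \<in> A"
      then have x: "x \<in> {1..?n}" using assms(1) by auto
      have "(x - 1) mod m + 1 \<in> A" using red[of x] x xA by simp
      moreover have "(x - 1) mod m + 1 \<in> {1..m}" using assms(2) by (simp add: Suc_leI)
      ultimately show "x \<in> per k m (A \<inter> {1..m})" using per_char[of "A \<inter> {1..m}" m x k] assms(2) x by auto
    qed
    show "per k m (A \<inter> {1..m}) \<subseteq> A"
    proof
      fix x assume "x \<in> per k m (A \<inter> {1..m})"
      then have x: "x \<in> {1..?n}" "(x - 1) mod m + 1 \<in> A" using per_char[of "A \<inter> {1..m}" m x k] assms(2) by auto
      then show "x \<in> A" using red[of x] by simp
    qed
  qed
qed

lemma per_sl: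
  assumes M: "M \<subseteq> {1..m}" and q: "card M = q" "0 < q"
  shows "sl (per k m M) = map (\<lambda>v. (v div q) * m + sl M ! (v mod q)) [0..<k * q]"
proof (rule sls_eq)
  let ?g = "\<lambda>v. (v div q) * m + sl M ! (v mod q)"
  have finM: "finite M" using M finite_subset by blast
  have slM: "v < q \<Longrightarrow> sl M ! v \<in> M" for v using sl_nth_in[OF finM] q by simp
  have slR: "1 \<le> sl M ! v \<and> sl M ! v \<le> m" if "v < q" for v
  proof -
    have "sl M ! v \<in> M" using slM that .
    then show ?thesis using M by auto
  qed
  show "sorted_wrt (<) (map ?g [0..<k * q])"
    unfolding sorted_wrt_map
  proof (rule sorted_wrt_mono_rel[OF _ sorted_wrt_upt])
    fix v w assume "v \<in> set [0..<k * q]" "w \<in> set [0..<k * q]" "v < w"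
    show "?g v < ?g w"
    proof (cases "v div q < w div q")
      case True
      have "?g v \<le> (v div q) * m + m" using slR[of "v mod q"] q by simp
      also have "\<dots> = Suc (v div q) * m" by simp
      also have "\<dots> \<le> (w div q) * m" using True by (intro mult_le_mono1) simp
      also have "\<dots> < ?g w" using slR[of "w mod q"] q by simp
      finally show ?thesis .
    next
      case False
      then have d: "v div q = w div q" using \<open>v < w\<close> div_le_mono[of v w q] by simp
      then have "v mod q < w mod q" using \<open>v < w\<close> by (metis div_mult_mod_eq nat_add_left_cancel_less)
      then have "sl M ! (v mod q) < sl M ! (w mod q)"
        using sl_strict[OF finM] q by simp
      then show ?thesis using d by simp
    qed
  qed
  show "set (map ?g [0..<k * q]) = per k m M"
  proof
    show "set (map ?g [0..<k * q]) \<subseteq> per k m M"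
    proof
      fix x assume "x \<in> set (map ?g [0..<k * q])"
      then obtain v where v: "v < k * q" "x = ?g v" by auto
      have "v div q < k" using v(1) q by (simp add: div_less_iff_less_mult mult.commute)
      moreover have "sl M ! (v mod q) \<in> M" using slM q by simp
      ultimately show "x \<in> per k m M" unfolding per_def using v(2) by force
    qed
    show "per k m M \<subseteq> set (map ?g [0..<k * q])"
    proof
      fix x assume "x \<in> per k m M"
      then obtain i a where ia: "i < k" "a \<in> M" "x = i * m + a" unfolding per_def by auto
      have "a \<in> set (sl M)" using ia(2) finM by simp
      then obtain p where p0: "p < length (sl M)" "sl M ! p = a" by (auto simp: in_set_conv_nth)
      then have p: "p < q" "sl M ! p = a" using q finM by auto
      have "i * q + p < k * q"
      proof -
        have "i * q + p < i * q + q" using p by simp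
        also have "\<dots> = Suc i * q" by simp
        also have "\<dots> \<le> k * q" using ia(1) by (intro mult_le_mono1) simp
        finally show ?thesis .
      qed
      moreover have "?g (i * q + p) = x" using p ia q by simp
      ultimately show "x \<in> set (map ?g [0..<k * q])" by (auto simp: image_iff intro!: bexI[of _ "i * q + p"])
    qed
  qed
qed

lemma Iop_rel:
  assumes M: "M \<subseteq> {1..m}" and q: "card M = q" "0 < q" and V: "V y \<le> k * q"
  shows "Iop m M V y = rel (per k m M) V y"
proof (cases "V y = 0")
  case True then show ?thesis by (simp add: Iop_def rel_def)
next
  case False
  have "V y - 1 < k * q" using False V by simp
  then show ?thesis using False per_sl[OF M q, of k] q by (simp add: Iop_def rel_def)
qed


context sk
begin

lemma valid_cong:
  assumes "\<And>j. j < b \<Longrightarrow> A j = A' j \<and> U j = U' j"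
  shows "valid A U \<longleftrightarrow> valid A' U'"
proof -
  have "(\<Union>j<b. A j) = (\<Union>j<b. A' j)" using assms by auto
  then show ?thesis unfolding valid_def using assms by auto
qed

lemma assemble_cong:
  assumes "\<And>j. j < b \<Longrightarrow> A j = A' j \<and> U j = U' j"
  shows "assemble A U = assemble A' U'"
  unfolding assemble_def by (rule skew_union_cong) (use assms in simp)

lemma card_Int_Suc:
  "finite A \<Longrightarrow> card (A \<inter> {1..Suc t}) = (if Suc t \<in> A then Suc (card (A \<inter> {1..t})) else card (A \<inter> {1..t}))"
proof -
  assume f: "finite A"
  have e: "{1..Suc t} = insert (Suc t) {1..t}" by auto
  show ?thesis
  proof (cases "Suc t \<in> A")
    case True
    then have "A \<inter> {1..Suc t} = insert (Suc t) (A \<inter> {1..t})" unfolding e by auto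
    then show ?thesis using True f by simp
  next
    case False
    then have "A \<inter> {1..Suc t} = A \<inter> {1..t}" unfolding e by auto
    then show ?thesis using False by simp
  qed
qed

lemma iter:
  assumes V: "valid A U" and N0: "0 < N"
  shows "t \<le> N \<Longrightarrow> (promotion S ^^ t) (assemble A U) =
      assemble (\<lambda>j. rotn N t ` A j) (\<lambda>j. (promotion (Y j) ^^ card (A j \<inter> {1..t})) (U j))
    \<and> valid (\<lambda>j. rotn N t ` A j) (\<lambda>j. (promotion (Y j) ^^ card (A j \<inter> {1..t})) (U j))"
proof (induction t)
  case 0
  have e: "j < b \<Longrightarrow> rotn N 0 ` A j = A j \<and> (promotion (Y j) ^^ card (A j \<inter> {1..0})) (U j) = U j" for j
  proof -
    assume j: "j < b"
    have "rotn N 0 ` A j = A j"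
      using validD(2)[OF V j] by (auto simp: rotn_def image_iff intro!: bexI)
    then show ?thesis by simp
  qed
  show ?case using assemble_cong[OF e] valid_cong[OF e] V by simp
next
  case (Suc t)
  then have tN: "t < N" by simp
  define At where "At = (\<lambda>j. rotn N t ` A j)"
  define Ut where "Ut = (\<lambda>j. (promotion (Y j) ^^ card (A j \<inter> {1..t})) (U j))"
  have IH: "(promotion S ^^ t) (assemble A U) = assemble At Ut" "valid At Ut"
    using Suc.IH tN unfolding At_def Ut_def by auto
  note P = pr_assemble[OF IH(2) N0]
  have e: "rotn N 1 ` At j = rotn N (Suc t) ` A j \<and>
      (if 1 \<in> At j then promotion (Y j) (Ut j) else Ut j) = (promotion (Y j) ^^ card (A j \<inter> {1..Suc t})) (U j)"
    if j: "j < b" for j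
  proof
    have AN: "A j \<subseteq> {1..N}" by (rule validD(2)[OF V j])
    have fin: "finite (A j)" by (rule valid_fin[OF V j])
    show "rotn N 1 ` At j = rotn N (Suc t) ` A j"
      unfolding At_def image_image using rotn_Suc[OF _ tN] AN by (intro image_cong) auto
    have "1 \<in> At j \<longleftrightarrow> Suc t \<in> A j"
    proof
      assume "1 \<in> At j"
      then obtain a where "a \<in> A j" "rotn N t a = 1" unfolding At_def by auto
      then show "Suc t \<in> A j" using rotn_one[OF _ tN] AN by auto
    next
      assume "Suc t \<in> A j"
      moreover have "rotn N t (Suc t) = 1" using rotn_one[OF _ tN, of "Suc t"] tN by simp
      ultimately show "1 \<in> At j" unfolding At_def by (metis image_eqI)
    qed
    then show "(if 1 \<in> At j then promotion (Y j) (Ut j) else Ut j) = (promotion (Y j) ^^ card (A j \<inter> {1..Suc t})) (U j)"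
      unfolding Ut_def card_Int_Suc[OF fin] by simp
  qed
  have "(promotion S ^^ Suc t) (assemble A U) = promotion S (assemble At Ut)" using IH(1) by simp
  also have "\<dots> = assemble (\<lambda>j. rotn N (Suc t) ` A j) (\<lambda>j. (promotion (Y j) ^^ card (A j \<inter> {1..Suc t})) (U j))"
    unfolding P(1) by (rule assemble_cong) (use e in blast)
  moreover have "valid (\<lambda>j. rotn N 1 ` At j) (\<lambda>j. if 1 \<in> At j then promotion (Y j) (Ut j) else Ut j) \<longleftrightarrow>
      valid (\<lambda>j. rotn N (Suc t) ` A j) (\<lambda>j. (promotion (Y j) ^^ card (A j \<inter> {1..Suc t})) (U j))"
    by (rule valid_cong) (use e in blast)
  ultimately show ?case using P(2) by simp
qed

lemma fixed_iff:
  assumes V: "valid A U" and N0: "0 < N" and m: "m \<le> N"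
  shows "(promotion S ^^ m) (assemble A U) = assemble A U \<longleftrightarrow>
    (\<forall>j<b. rotn N m ` A j = A j \<and> (promotion (Y j) ^^ card (A j \<inter> {1..m})) (U j) = U j)"
proof -
  note I = iter[OF V N0 m]
  show ?thesis
  proof
    assume h: "(promotion S ^^ m) (assemble A U) = assemble A U"
    show "\<forall>j<b. rotn N m ` A j = A j \<and> (promotion (Y j) ^^ card (A j \<inter> {1..m})) (U j) = U j"
    proof (intro allI impI)
      fix j assume j: "j < b"
      have eq: "assemble (\<lambda>j. rotn N m ` A j) (\<lambda>j. (promotion (Y j) ^^ card (A j \<inter> {1..m})) (U j)) = assemble A U"
        using I h by simp
      show "rotn N m ` A j = A j \<and> (promotion (Y j) ^^ card (A j \<inter> {1..m})) (U j) = U j"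
        using assemble_unique[OF conjunct2[OF I] V eq j] by simp
    qed
  next
    assume h: "\<forall>j<b. rotn N m ` A j = A j \<and> (promotion (Y j) ^^ card (A j \<inter> {1..m})) (U j) = U j"
    have "(promotion S ^^ m) (assemble A U) = assemble (\<lambda>j. rotn N m ` A j) (\<lambda>j. (promotion (Y j) ^^ card (A j \<inter> {1..m})) (U j))"
      using I by simp
    also have "\<dots> = assemble A U" by (rule assemble_cong) (use h in simp)
    finally show "(promotion S ^^ m) (assemble A U) = assemble A U" .
  qed
qed

end

context sk
begin

lemma per_Int: "M \<subseteq> {1..m} \<Longrightarrow> 0 < m \<Longrightarrow> 0 < k \<Longrightarrow> per k m M \<inter> {1..m} = M"
proof -
  assume M: "M \<subseteq> {1..m}" and m: "0 < m" and k: "0 < k"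
  have "x \<in> per k m M \<longleftrightarrow> x \<in> M" if "x \<in> {1..m}" for x
  proof -
    have "x - 1 < m" using that by auto
    then have e: "(x - 1) mod m + 1 = x" using that by simp
    have mk: "m \<le> k * m" using k by simp
    have xk: "x \<le> k * m" using that mk by (meson atLeastAtMost_iff order_trans)
    show ?thesis using per_char[OF M m] that e xk by auto
  qed
  then show ?thesis using M by blast
qed

lemma fixed_decomp:
  assumes k: "0 < k" and Nk: "N = k * m" and m: "0 < m" and T: "T \<in> fixed_SYT S m"
  shows "\<exists>A U. valid A U \<and> (\<forall>j<b. U j \<in> SYT (Y j)) \<and> T = assemble A U \<and>
    (\<forall>j<b. A j = per k m (A j \<inter> {1..m}) \<and> (promotion (Y j) ^^ card (A j \<inter> {1..m})) (U j) = U j)"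
proof -
  have TS: "T \<in> SYT S" and Tf: "(promotion S ^^ m) T = T" using T by (auto simp: fixed_SYT_def)
  obtain A U where AU: "valid A U" "\<forall>j<b. U j \<in> SYT (Y j)" "T = assemble A U"
    using decompose[OF TS] by blast
  have N0: "0 < N" using Nk k m by simp
  have mN: "m \<le> N" using Nk k by simp
  have F: "\<forall>j<b. rotn N m ` A j = A j \<and> (promotion (Y j) ^^ card (A j \<inter> {1..m})) (U j) = U j"
    using fixed_iff[OF AU(1) N0 mN] Tf AU(3) by simp
  have "A j = per k m (A j \<inter> {1..m})" if j: "j < b" for j
    using rot_per[of "A j" k m] validD(2)[OF AU(1) j] Nk m k F j by simp
  then show ?thesis using AU F by blast
qed

lemma fixed_dvd:
  assumes k: "0 < k" and Nk: "N = k * m" and m: "0 < m" and T: "T \<in> fixed_SYT S m"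
  shows "\<forall>j<b. k dvd q j"
proof (intro allI impI)
  fix j assume j: "j < b"
  obtain A U where AU: "valid A U" "\<forall>j<b. A j = per k m (A j \<inter> {1..m})"
    using fixed_decomp[OF assms] by blast
  have "q j = card (A j)" using validD(3)[OF AU(1) j] by simp
  also have "\<dots> = k * card (A j \<inter> {1..m})" using AU(2) j per_card[of "A j \<inter> {1..m}" m k] by auto
  finally show "k dvd q j" by simp
qed


lemma q_div:
  assumes "0 < k" "j < b" "k dvd q j"
  shows "k * (q j div k) = q j" "0 < q j div k"
proof -
  show e: "k * (q j div k) = q j" using assms(3) by simp
  show "0 < q j div k" using e q_pos[OF assms(2)] by (metis mult_0_right neq0_conv)
qed

lemma Iop_rel_j:
  assumes k: "0 < k" and j: "j < b" and dv: "k dvd q j" and lU: "lite (Y j) V"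
    and M: "M \<subseteq> {1..m}" "card M = q j div k" and y: "y \<in> Y j"
  shows "Iop m M V y = rel (per k m M) V y"
proof -
  have "V y \<le> card (Y j)" using lU y unfolding lite_def bij_betw_def by auto
  then have "V y \<le> k * (q j div k)" using q_div(1)[OF k j dv] Y_card by simp
  then show ?thesis using Iop_rel[OF M q_div(2)[OF k j dv]] by simp
qed

lemma lhs_in:
  assumes k: "0 < k" and Nk: "N = k * m" and m: "0 < m" and dv: "\<forall>j<b. k dvd q j"
    and T: "T \<in> fixed_SYT S m"
  shows "\<exists>Ts Ms. T = skew_union lams (\<lambda>j. Iop m (Ms j) (Ts j))
    \<and> (\<forall>j<b. Ts j \<in> fixed_SYT (young (lams ! j)) (psize (lams ! j) div k))
    \<and> (\<forall>j<b. Ms j \<subseteq> {1..m} \<and> card (Ms j) = psize (lams ! j) div k)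
    \<and> (\<forall>i<b. \<forall>j<b. i \<noteq> j \<longrightarrow> Ms i \<inter> Ms j = {})
    \<and> (\<Union>j<b. Ms j) = {1..m}"
proof -
  obtain A U where AU: "valid A U" "\<forall>j<b. U j \<in> SYT (Y j)" "T = assemble A U"
    "\<forall>j<b. A j = per k m (A j \<inter> {1..m}) \<and> (promotion (Y j) ^^ card (A j \<inter> {1..m})) (U j) = U j"
    using fixed_decomp[OF k Nk m T] by blast
  define Ms where "Ms j = A j \<inter> {1..m}" for j
  have Msub: "Ms j \<subseteq> {1..m}" for j by (simp add: Ms_def)
  have cM: "card (Ms j) = q j div k" if j: "j < b" for j
  proof -
    have "q j = card (A j)" using validD(3)[OF AU(1) j] by simp
    also have "\<dots> = k * card (Ms j)" using AU(4) j per_card[OF Msub, of k] unfolding Ms_def by metis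
    finally show ?thesis using k by simp
  qed
  have fx: "U j \<in> fixed_SYT (young (lams ! j)) (psize (lams ! j) div k)" if j: "j < b" for j
  proof -
    have p: "(promotion (Y j) ^^ card (A j \<inter> {1..m})) (U j) = U j" using AU(4) j by blast
    have c: "card (A j \<inter> {1..m}) = q j div k" using cM[OF j] by (simp add: Ms_def)
    have "U j \<in> SYT (Y j)" using AU(2) j by blast
    then show ?thesis using p unfolding c fixed_SYT_def Y_def q_def by simp
  qed
  have eqT: "T = skew_union lams (\<lambda>j. Iop m (Ms j) (U j))"
    unfolding AU(3) assemble_def
  proof (rule skew_union_cong)
    fix j y assume j: "j < b" and y: "y \<in> Y j"
    have "Iop m (Ms j) (U j) y = rel (per k m (Ms j)) (U j) y"
      by (rule Iop_rel_j[OF k j _ validD(1)[OF AU(1) j] Msub cM[OF j] y]) (use dv j in simp)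
    also have "per k m (Ms j) = A j" using AU(4) j unfolding Ms_def by metis
    finally show "rel (A j) (U j) y = Iop m (Ms j) (U j) y" by simp
  qed
  have dis: "\<forall>i<b. \<forall>j<b. i \<noteq> j \<longrightarrow> Ms i \<inter> Ms j = {}"
    using AU(1) unfolding valid_def Ms_def by blast
  have "(\<Union>j<b. Ms j) = (\<Union>j<b. A j) \<inter> {1..m}" unfolding Ms_def by blast
  also have "(\<Union>j<b. A j) = {1..N}" using AU(1) unfolding valid_def by blast
  finally have un: "(\<Union>j<b. Ms j) = {1..m}" using Nk k by auto
  show ?thesis
    by (rule exI[of _ U], rule exI[of _ Ms]) (use eqT fx Msub cM dis un in \<open>simp add: q_def\<close>)
qed

lemma rhs_in:
  assumes k: "0 < k" and Nk: "N = k * m" and m: "0 < m" and dv: "\<forall>j<b. k dvd q j"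
    and Ts: "\<forall>j<b. Ts j \<in> fixed_SYT (young (lams ! j)) (psize (lams ! j) div k)"
    and Ms: "\<forall>j<b. Ms j \<subseteq> {1..m} \<and> card (Ms j) = psize (lams ! j) div k"
    and dis: "\<forall>i<b. \<forall>j<b. i \<noteq> j \<longrightarrow> Ms i \<inter> Ms j = {}"
    and un: "(\<Union>j<b. Ms j) = {1..m}"
  shows "skew_union lams (\<lambda>j. Iop m (Ms j) (Ts j)) \<in> fixed_SYT S m"
proof -
  define A where "A j = per k m (Ms j)" for j
  have TsS: "Ts j \<in> SYT (Y j)" "(promotion (Y j) ^^ (q j div k)) (Ts j) = Ts j" if "j < b" for j
    using Ts that unfolding fixed_SYT_def Y_def q_def by auto
  have Msj: "Ms j \<subseteq> {1..m}" "card (Ms j) = q j div k" if "j < b" for j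
    using Ms that unfolding q_def by auto
  have V: "valid A Ts"
    unfolding valid_def
  proof (intro conjI allI impI)
    fix j assume j: "j < b"
    show "lite (Y j) (Ts j)" using SYT_lite TsS(1)[OF j] by simp
    show "A j \<subseteq> {1..N}" unfolding A_def Nk using per_sub[OF Msj(1)[OF j] m] by simp
    show "card (A j) = q j" unfolding A_def per_card[OF Msj(1)[OF j]] Msj(2)[OF j]
      using q_div(1)[OF k j] dv j by simp
  next
    fix i j assume ij: "i < b" "j < b" "i \<noteq> j"
    show "A i \<inter> A j = {}"
    proof (rule ccontr)
      assume "A i \<inter> A j \<noteq> {}"
      then obtain x where "x \<in> A i" "x \<in> A j" by blast
      then have "(x - 1) mod m + 1 \<in> Ms i" "(x - 1) mod m + 1 \<in> Ms j"
        unfolding A_def using per_char[OF Msj(1)[OF ij(1)] m] per_char[OF Msj(1)[OF ij(2)] m] by auto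
      then show False using dis ij by blast
    qed
  next
    show "(\<Union>j<b. A j) = {1..N}"
    proof
      show "(\<Union>j<b. A j) \<subseteq> {1..N}" unfolding A_def Nk using per_sub Msj(1) m by blast
      show "{1..N} \<subseteq> (\<Union>j<b. A j)"
      proof
        fix x assume x: "x \<in> {1..N}"
        have "(x - 1) mod m + 1 \<in> {1..m}" using m by (simp add: Suc_leI)
        then obtain j where j: "j < b" "(x - 1) mod m + 1 \<in> Ms j" using un by blast
        then have "x \<in> A j" unfolding A_def using per_char[OF Msj(1)[OF j(1)] m] x Nk by auto
        then show "x \<in> (\<Union>j<b. A j)" using j by blast
      qed
    qed
  qed
  have eq: "skew_union lams (\<lambda>j. Iop m (Ms j) (Ts j)) = assemble A Ts"
    unfolding assemble_def
  proof (rule skew_union_cong)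
    fix j y assume j: "j < b" and y: "y \<in> Y j"
    show "Iop m (Ms j) (Ts j) y = rel (A j) (Ts j) y" unfolding A_def
      by (rule Iop_rel_j[OF k j _ SYT_lite[OF TsS(1)[OF j]] Msj[OF j] y]) (use dv j in simp)
  qed
  have N0: "0 < N" using Nk k m by simp
  have mN: "m \<le> N" using Nk k by simp
  have fixA: "\<forall>j<b. rotn N m ` A j = A j \<and> (promotion (Y j) ^^ card (A j \<inter> {1..m})) (Ts j) = Ts j"
  proof (intro allI impI conjI)
    fix j assume j: "j < b"
    show "rotn N m ` A j = A j" unfolding A_def Nk by (rule per_rot[OF Msj(1)[OF j] m k])
    have "A j \<inter> {1..m} = Ms j" unfolding A_def by (rule per_Int[OF Msj(1)[OF j] m k])
    then show "(promotion (Y j) ^^ card (A j \<inter> {1..m})) (Ts j) = Ts j" using TsS(2)[OF j] Msj(2)[OF j] by simp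
  qed
  have "(promotion S ^^ m) (assemble A Ts) = assemble A Ts" using fixed_iff[OF V N0 mN] fixA by simp
  moreover have "assemble A Ts \<in> SYT S" using assemble_SYT[OF V] TsS(1) by blast
  ultimately show ?thesis unfolding eq fixed_SYT_def by simp
qed

end


theorem mainTheorem16:
  fixes lams :: "nat list list" and n k :: nat
  assumes "lams \<noteq> []"
    and "\<forall>lam\<in>set lams. is_partition lam \<and> psize lam > 0"
    and "n = (\<Sum>j<length lams. psize (lams ! j))"
    and "0 < k" and "k dvd n"
  shows "(k dvd Gcd (psize ` set lams) \<longrightarrow>
           fixed_SYT (skew_shape lams) (n div k) =
             {skew_union lams (\<lambda>j. Iop (n div k) (Ms j) (Ts j)) | Ts Ms.
                (\<forall>j<length lams. Ts j \<in> fixed_SYT (young (lams ! j)) (psize (lams ! j) div k))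
              \<and> (\<forall>j<length lams. Ms j \<subseteq> {1..n div k} \<and> card (Ms j) = psize (lams ! j) div k)
              \<and> (\<forall>i<length lams. \<forall>j<length lams. i \<noteq> j \<longrightarrow> Ms i \<inter> Ms j = {})
              \<and> (\<Union>j<length lams. Ms j) = {1..n div k}})
       \<and> (\<not> k dvd Gcd (psize ` set lams) \<longrightarrow> fixed_SYT (skew_shape lams) (n div k) = {})"
proof -
  interpret sk lams using assms(2) by unfold_locales
  have nN: "n = N" using assms(3) by (simp add: N_def q_def)
  define m where "m = n div k"
  have Nk: "N = k * m" using assms(5) nN by (simp add: m_def)
  have "q 0 > 0" using q_pos assms(1) by simp
  moreover have "q 0 \<le> N" unfolding N_def using assms(1) by (intro member_le_sum) auto
  ultimately have N0: "0 < N" by simp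
  have m0: "0 < m" using Nk N0 by (metis mult_0_right neq0_conv)
  have gcd_iff: "k dvd Gcd (psize ` set lams) \<longleftrightarrow> (\<forall>j<b. k dvd q j)"
  proof
    assume h: "k dvd Gcd (psize ` set lams)"
    show "\<forall>j<b. k dvd q j"
    proof (intro allI impI)
      fix j assume "j < b"
      then have "psize (lams ! j) \<in> psize ` set lams" by simp
      then have "Gcd (psize ` set lams) dvd q j" unfolding q_def by (rule Gcd_dvd)
      then show "k dvd q j" using h by (metis dvd_trans)
    qed
  next
    assume h: "\<forall>j<b. k dvd q j"
    show "k dvd Gcd (psize ` set lams)"
    proof (rule Gcd_greatest)
      fix x assume "x \<in> psize ` set lams"
      then obtain j where "j < b" "x = psize (lams ! j)" by (auto simp: in_set_conv_nth)
      then show "k dvd x" using h by (simp add: q_def)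
    qed
  qed
  show ?thesis
  proof (intro conjI impI)
    assume "k dvd Gcd (psize ` set lams)"
    then have dv: "\<forall>j<b. k dvd q j" using gcd_iff by blast
    show "fixed_SYT S (n div k) =
             {skew_union lams (\<lambda>j. Iop (n div k) (Ms j) (Ts j)) | Ts Ms.
                (\<forall>j<length lams. Ts j \<in> fixed_SYT (young (lams ! j)) (psize (lams ! j) div k))
              \<and> (\<forall>j<length lams. Ms j \<subseteq> {1..n div k} \<and> card (Ms j) = psize (lams ! j) div k)
              \<and> (\<forall>i<length lams. \<forall>j<length lams. i \<noteq> j \<longrightarrow> Ms i \<inter> Ms j = {})
              \<and> (\<Union>j<length lams. Ms j) = {1..n div k}}"
      unfolding m_def[symmetric]
    proof (rule equalityI)
      show "fixed_SYT S m \<subseteq> {skew_union lams (\<lambda>j. Iop m (Ms j) (Ts j)) | Ts Ms.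
                (\<forall>j<length lams. Ts j \<in> fixed_SYT (young (lams ! j)) (psize (lams ! j) div k))
              \<and> (\<forall>j<length lams. Ms j \<subseteq> {1..m} \<and> card (Ms j) = psize (lams ! j) div k)
              \<and> (\<forall>i<length lams. \<forall>j<length lams. i \<noteq> j \<longrightarrow> Ms i \<inter> Ms j = {})
              \<and> (\<Union>j<length lams. Ms j) = {1..m}}"
      proof
        fix T assume "T \<in> fixed_SYT S m"
        from lhs_in[OF assms(4) Nk m0 dv this] obtain Ts Ms where
          P: "T = skew_union lams (\<lambda>j. Iop m (Ms j) (Ts j))"
          "(\<forall>j<b. Ts j \<in> fixed_SYT (young (lams ! j)) (psize (lams ! j) div k))"
          "(\<forall>j<b. Ms j \<subseteq> {1..m} \<and> card (Ms j) = psize (lams ! j) div k)"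
          "(\<forall>i<b. \<forall>j<b. i \<noteq> j \<longrightarrow> Ms i \<inter> Ms j = {})"
          "(\<Union>j<b. Ms j) = {1..m}" by (elim exE conjE) (rule that)
        show "T \<in> {skew_union lams (\<lambda>j. Iop m (Ms j) (Ts j)) | Ts Ms.
                (\<forall>j<length lams. Ts j \<in> fixed_SYT (young (lams ! j)) (psize (lams ! j) div k))
              \<and> (\<forall>j<length lams. Ms j \<subseteq> {1..m} \<and> card (Ms j) = psize (lams ! j) div k)
              \<and> (\<forall>i<length lams. \<forall>j<length lams. i \<noteq> j \<longrightarrow> Ms i \<inter> Ms j = {})
              \<and> (\<Union>j<length lams. Ms j) = {1..m}}"
          unfolding mem_Collect_eq
          by (rule exI[where x=Ts], rule exI[where x=Ms]) (intro conjI; fact)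
      qed
      show "{skew_union lams (\<lambda>j. Iop m (Ms j) (Ts j)) | Ts Ms.
                (\<forall>j<length lams. Ts j \<in> fixed_SYT (young (lams ! j)) (psize (lams ! j) div k))
              \<and> (\<forall>j<length lams. Ms j \<subseteq> {1..m} \<and> card (Ms j) = psize (lams ! j) div k)
              \<and> (\<forall>i<length lams. \<forall>j<length lams. i \<noteq> j \<longrightarrow> Ms i \<inter> Ms j = {})
              \<and> (\<Union>j<length lams. Ms j) = {1..m}} \<subseteq> fixed_SYT S m"
      proof
        fix x assume "x \<in> {skew_union lams (\<lambda>j. Iop m (Ms j) (Ts j)) | Ts Ms.
                (\<forall>j<length lams. Ts j \<in> fixed_SYT (young (lams ! j)) (psize (lams ! j) div k))
              \<and> (\<forall>j<length lams. Ms j \<subseteq> {1..m} \<and> card (Ms j) = psize (lams ! j) div k)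
              \<and> (\<forall>i<length lams. \<forall>j<length lams. i \<noteq> j \<longrightarrow> Ms i \<inter> Ms j = {})
              \<and> (\<Union>j<length lams. Ms j) = {1..m}}"
        then obtain Ts Ms where P: "x = skew_union lams (\<lambda>j. Iop m (Ms j) (Ts j))"
          "(\<forall>j<b. Ts j \<in> fixed_SYT (young (lams ! j)) (psize (lams ! j) div k))"
          "(\<forall>j<b. Ms j \<subseteq> {1..m} \<and> card (Ms j) = psize (lams ! j) div k)"
          "(\<forall>i<b. \<forall>j<b. i \<noteq> j \<longrightarrow> Ms i \<inter> Ms j = {})"
          "(\<Union>j<b. Ms j) = {1..m}" unfolding mem_Collect_eq by (elim exE conjE) 
        show "x \<in> fixed_SYT S m" unfolding P(1) by (rule rhs_in[OF assms(4) Nk m0 dv P(2-5)])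
      qed
    qed
  next
    assume nd: "\<not> k dvd Gcd (psize ` set lams)"
    show "fixed_SYT S (n div k) = {}"
    proof (rule ccontr)
      assume "fixed_SYT S (n div k) \<noteq> {}"
      then obtain T where "T \<in> fixed_SYT S m" unfolding m_def by blast
      from fixed_dvd[OF assms(4) Nk m0 this] show False using nd gcd_iff by blast
    qed
  qed
qed


end
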